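(* Assume the following setting. For each $n$, $X\in\mathbb{R}^{n\times e}$ is deterministic with rows $x_i$; $\Gamma\in\mathbb{R}^{e\times p}$, $\sigma^2>0$, $\sigma_z^2>0$, $e,p$ are fixed; $\lambda\ge0$ and $\beta_0\in\mathbb{R}^e$ depend on $n$. Let $y=X\beta_0+\epsilon$, $Z=X\Gamma+E$, with entries of $E$ i.i.d. $N(0,\sigma_z^2)$, entries of $\epsilon$ i.i.d. $N(0,\sigma^2)$, $E,\epsilon$ independent. Assume as $n\to\infty$: $\lambda/n\to\kappa\ge0$; $\sqrt n\beta_0\to\alpha_0$; $\frac1nX^TX\to\Sigma$ positive definite; $\frac1n\mathbf{1}^TX\to\Theta\in\mathbb{R}^{1\times e}$; $\max_i\|x_i\|=o(n^{1/3})$. Let $\tilde Z=[\mathbf{1},Z]$ with rows $\tilde Z_i$, and let $\tilde Z_{(i)}$, $\epsilon_{(i)}$ denote $\tilde Z$, $\epsilon$ with the $i$-th row (entry) removed. Define $H_i:=\tilde Z_i(\tilde Z_{(i)}^T\tilde Z_{(i)}+\lambda I)^{-1}\tilde Z_{(i)}^T$, $\delta_i:=H_i\epsilon_{(i)}$, $\delta=(\delta_1,\dots,\delta_n)^T$, and $\delta':=\tilde Z(\tilde Z^T\tilde Z+\lambda I)^{-1}\tilde Z^T\epsilon$. Then $\|\delta-\delta'\|=o_P(1)$ as $n\to\infty$.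
   Context: $\|\cdot\|$ is the Euclidean norm; $I$ is the $(p+1)\times(p+1)$ identity. *)

theory Defs
  imports "HOL-Probability.Probability" "HOL-Library.Landau_Symbols"
begin

text \<open>Gram matrix  sum over j in S of z_j z_j^T  (= Z_S^T Z_S where Z_S has rows z_j, j in S).\<close>
definition gram :: "(nat \<Rightarrow> real^'k) \<Rightarrow> nat set \<Rightarrow> real^'k^'k" where
  "gram z S = (\<chi> a b. \<Sum>j\<in>S. z j $ a * z j $ b)"

text \<open>Z_S^T v_S = sum over j in S of v_j z_j.\<close>
definition cross :: "(nat \<Rightarrow> real^'k) \<Rightarrow> (nat \<Rightarrow> real) \<Rightarrow> nat set \<Rightarrow> real^'k" where
  "cross z v S = (\<Sum>j\<in>S. v j *\<^sub>R z j)"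

definition pos_def :: "real^'k^'k \<Rightarrow> bool" where
  "pos_def S \<longleftrightarrow> transpose S = S \<and> (\<forall>v. v \<noteq> 0 \<longrightarrow> v \<bullet> (S *v v) > 0)"

text \<open>Row i of Z~ = [1, Z]: index None is the intercept column, Some k is column k of Z = X Gamma + E.\<close>
definition ztilde :: "real^'p^'e \<Rightarrow> (nat \<Rightarrow> real^'e) \<Rightarrow> (nat \<Rightarrow> 'p \<Rightarrow> real) \<Rightarrow> nat \<Rightarrow> real^('p option)" where
  "ztilde Gam x Emat i = (\<chi> k. case k of None \<Rightarrow> 1 | Some k' \<Rightarrow> (transpose Gam *v x i) $ k' + Emat i k')"

definition delta_loo :: "(nat \<Rightarrow> real^'k) \<Rightarrow> (nat \<Rightarrow> real) \<Rightarrow> real \<Rightarrow> nat \<Rightarrow> nat \<Rightarrow> real" where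
  "delta_loo z v lam n i = z i \<bullet> (matrix_inv (gram z ({..<n} - {i}) + lam *\<^sub>R mat 1) *v cross z v ({..<n} - {i}))"

definition delta_full :: "(nat \<Rightarrow> real^'k) \<Rightarrow> (nat \<Rightarrow> real) \<Rightarrow> real \<Rightarrow> nat \<Rightarrow> nat \<Rightarrow> real" where
  "delta_full z v lam n i = z i \<bullet> (matrix_inv (gram z {..<n} + lam *\<^sub>R mat 1) *v cross z v {..<n})"

text \<open>Index set and family of all noise variables at sample size n: entries of E (n x p) and of eps (n).\<close>
definition noise_index :: "nat \<Rightarrow> ((nat \<times> 'p) + nat) set" where
  "noise_index n = Inl ` ({..<n} \<times> UNIV) \<union> Inr ` {..<n}"

definition noise_family :: "(nat \<Rightarrow> nat \<Rightarrow> 'p \<Rightarrow> 'w \<Rightarrow> real) \<Rightarrow> (nat \<Rightarrow> nat \<Rightarrow> 'w \<Rightarrow> real) \<Rightarrow> nat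
    \<Rightarrow> ((nat \<times> 'p) + nat) \<Rightarrow> 'w \<Rightarrow> real" where
  "noise_family E eps n j = (case j of Inl (i, k) \<Rightarrow> E n i k | Inr i \<Rightarrow> eps n i)"

end

theory Submission
  imports Defs
begin

lemma gram_mult: "gram z S *v v = (\<Sum>j\<in>S. (z j \<bullet> v) *\<^sub>R z j)"
proof -
  have "(gram z S *v v) $ a = (\<Sum>j\<in>S. (z j \<bullet> v) *\<^sub>R z j) $ a" for a
  proof -
    have "(gram z S *v v) $ a = (\<Sum>b\<in>UNIV. (\<Sum>j\<in>S. z j $ a * z j $ b) * v $ b)"
      by (simp add: matrix_vector_mult_def gram_def)
    also have "\<dots> = (\<Sum>j\<in>S. \<Sum>b\<in>UNIV. z j $ a * (z j $ b * v $ b))"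
      by (simp add: sum_distrib_right sum.swap[of _ UNIV] mult.assoc)
    also have "\<dots> = (\<Sum>j\<in>S. (z j \<bullet> v) * z j $ a)"
      by (simp add: inner_vec_def sum_distrib_left mult.commute)
    also have "\<dots> = (\<Sum>j\<in>S. (z j \<bullet> v) *\<^sub>R z j) $ a"
      by (simp add: sum_component)
    finally show ?thesis .
  qed
  then show ?thesis by (simp add: vec_eq_iff)
qed

lemma gram_quad: "v \<bullet> (gram z S *v v) = (\<Sum>j\<in>S. (z j \<bullet> v)\<^sup>2)"
  by (simp add: gram_mult inner_sum_right power2_eq_square inner_commute)

lemma cross_diff: "finite S \<Longrightarrow> i \<in> S \<Longrightarrow> cross z v (S - {i}) = cross z v S - v i *\<^sub>R z i"
  by (simp add: cross_def sum_diff1)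

lemma gram_diff_mult: "finite S \<Longrightarrow> i \<in> S \<Longrightarrow> gram z (S - {i}) *v u = gram z S *v u - (z i \<bullet> u) *\<^sub>R z i"
  by (simp add: gram_mult sum_diff1)

lemma reg_mult: "(G + lam *\<^sub>R mat 1) *v u = G *v u + lam *\<^sub>R (u::real^'k)"
proof -
  have "(lam *\<^sub>R mat 1) *v u = lam *\<^sub>R u"
    by (metis matrix_scaleR_vector_ac matrix_vector_mul_lid)
  then show ?thesis by (simp add: matrix_vector_mult_add_rdistrib)
qed

lemma inner_self_nn: "u \<bullet> u = norm u * norm (u::'a::real_inner)"
  by (metis dot_square_norm power2_eq_square)

lemma sq_le_of_abs: "\<bar>a::real\<bar> \<le> b \<Longrightarrow> a\<^sup>2 \<le> b\<^sup>2"
  by (metis abs_ge_zero power2_abs power_mono)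

lemma sq_diff_le: "((a::real) - b)\<^sup>2 \<le> 2 * a\<^sup>2 + 2 * b\<^sup>2"
proof -
  have "0 \<le> (a + b)\<^sup>2" by simp
  then show ?thesis unfolding power2_diff power2_sum by linarith
qed

lemma coercive_inv:
  fixes A :: "real^'k^'k"
  assumes m: "m > 0" and co: "\<And>u. m * (norm u)\<^sup>2 \<le> u \<bullet> (A *v u)"
  shows "A *v (matrix_inv A *v y) = y" "matrix_inv A *v (A *v x) = x"
    "norm (matrix_inv A *v y) \<le> norm y / m"
proof -
  have ker: "\<forall>x. A *v x = 0 \<longrightarrow> x = 0"
  proof (intro allI impI)
    fix x assume "A *v x = 0"
    with co[of x] have "m * (norm x)\<^sup>2 \<le> 0" by simp
    with m have "(norm x)\<^sup>2 \<le> 0" by (simp add: mult_le_0_iff)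
    then show "x = 0" by simp
  qed
  then obtain B where B: "B ** A = mat 1" using matrix_left_invertible_ker by blast
  then have B2: "A ** B = mat 1" using matrix_left_right_inverse by blast
  have ex: "\<exists>A'. A ** A' = mat 1 \<and> A' ** A = mat 1" using B B2 by blast
  have inv: "A ** matrix_inv A = mat 1 \<and> matrix_inv A ** A = mat 1"
    unfolding matrix_inv_def by (rule someI_ex[OF ex])
  show 1: "A *v (matrix_inv A *v y) = y" for y
    by (simp add: matrix_vector_mul_assoc inv)
  show "matrix_inv A *v (A *v x) = x"
    by (simp add: matrix_vector_mul_assoc inv)
  let ?x = "matrix_inv A *v y"
  have "m * (norm ?x)\<^sup>2 \<le> ?x \<bullet> y" using co[of ?x] 1[of y] by simp
  also have "\<dots> \<le> norm ?x * norm y" by (rule norm_cauchy_schwarz)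
  finally have h: "m * (norm ?x)\<^sup>2 \<le> norm ?x * norm y" .
  show "norm ?x \<le> norm y / m"
  proof (cases "norm ?x = 0")
    case True then show ?thesis using m by simp
  next
    case False
    then have "norm ?x > 0" by simp
    from h have "norm ?x * (m * norm ?x) \<le> norm ?x * norm y" by (simp add: power2_eq_square ac_simps)
    then have "m * norm ?x \<le> norm y" using \<open>norm ?x > 0\<close> by simp
    then show ?thesis using m by (simp add: field_simps)
  qed
qed

lemma det_bound:
  fixes z :: "nat \<Rightarrow> real^'k" and v :: "nat \<Rightarrow> real"
  assumes lam: "lam \<ge> 0" and m: "m > 0"
    and co: "\<And>u. 2 * m * (norm u)\<^sup>2 \<le> u \<bullet> (gram z {..<n} *v u)"
    and zb: "\<And>i. i < n \<Longrightarrow> (norm (z i))\<^sup>2 \<le> Mz" and Mm: "Mz \<le> m"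
  shows "(\<Sum>i<n. (delta_loo z v lam n i - delta_full z v lam n i)\<^sup>2)
     \<le> 2 * (Mz / m)\<^sup>2 * ((norm (cross z v {..<n}))\<^sup>2 * (\<Sum>i<n. (norm (z i))\<^sup>2)) / m\<^sup>2
        + 2 * (Mz / m\<^sup>2) * (\<Sum>i<n. (v i)\<^sup>2 * (norm (z i))\<^sup>2)"
proof -
  define A where "A = gram z {..<n} + lam *\<^sub>R mat 1"
  define c where "c = cross z v {..<n}"
  define s where "s = matrix_inv A *v c"
  have Mz0: "Mz \<ge> 0" if "i < n" for i using zb[OF that] by (meson order_trans zero_le_power2)
  have coA: "m * (norm u)\<^sup>2 \<le> u \<bullet> (A *v u)" for u
  proof -
    have "u \<bullet> (A *v u) = u \<bullet> (gram z {..<n} *v u) + lam * (norm u)\<^sup>2"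
      by (simp add: A_def reg_mult inner_add_right power2_norm_eq_inner)
    moreover have "m * (norm u)\<^sup>2 \<le> 2 * m * (norm u)\<^sup>2" using m by simp
    moreover have "lam * (norm u)\<^sup>2 \<ge> 0" using lam by simp
    moreover have "2 * m * (norm u)\<^sup>2 \<le> u \<bullet> (gram z {..<n} *v u)" by (rule co)
    ultimately show ?thesis by linarith
  qed
  have As: "A *v s = c" unfolding s_def by (rule coercive_inv(1)[OF m coA])
  have sn: "norm s \<le> norm c / m" unfolding s_def by (rule coercive_inv(3)[OF m coA])
  have each: "(delta_loo z v lam n i - delta_full z v lam n i)\<^sup>2
      \<le> 2 * (Mz / m)\<^sup>2 * ((norm c)\<^sup>2 * (norm (z i))\<^sup>2) / m\<^sup>2 + 2 * (Mz / m\<^sup>2) * ((v i)\<^sup>2 * (norm (z i))\<^sup>2)"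
    if i: "i < n" for i
  proof -
    define Ai where "Ai = gram z ({..<n} - {i}) + lam *\<^sub>R mat 1"
    define si where "si = matrix_inv Ai *v cross z v ({..<n} - {i})"
    have fin: "finite {..<n}" "i \<in> {..<n}" using i by auto
    have coAi: "m * (norm u)\<^sup>2 \<le> u \<bullet> (Ai *v u)" for u
    proof -
      have "Ai *v u = gram z {..<n} *v u - (z i \<bullet> u) *\<^sub>R z i + lam *\<^sub>R u"
        by (simp add: Ai_def reg_mult gram_diff_mult[OF fin])
      then have "u \<bullet> (Ai *v u) = u \<bullet> (gram z {..<n} *v u) - (z i \<bullet> u) * (u \<bullet> z i) + lam * (u \<bullet> u)"
        by (simp add: inner_add_right inner_diff_right)
      then have "u \<bullet> (Ai *v u) = u \<bullet> (gram z {..<n} *v u) - (z i \<bullet> u)\<^sup>2 + lam * (norm u)\<^sup>2"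
        by (simp add: inner_commute[of u "z i"] power2_eq_square inner_self_nn)
      moreover have "(z i \<bullet> u)\<^sup>2 \<le> (norm (z i))\<^sup>2 * (norm u)\<^sup>2"
        using sq_le_of_abs[OF Cauchy_Schwarz_ineq2[of "z i" u]] by (simp add: power_mult_distrib)
      moreover have "(norm (z i))\<^sup>2 * (norm u)\<^sup>2 \<le> m * (norm u)\<^sup>2"
        using zb[OF i] Mm by (intro mult_right_mono) simp_all
      moreover have "lam * (norm u)\<^sup>2 \<ge> 0" using lam by simp
      moreover have "2 * m * (norm u)\<^sup>2 \<le> u \<bullet> (gram z {..<n} *v u)" by (rule co)
      ultimately show ?thesis by linarith
    qed
    have Ais: "Ai *v s = c - (z i \<bullet> s) *\<^sub>R z i"
    proof -
      have "Ai *v s = A *v s - (z i \<bullet> s) *\<^sub>R z i"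
        by (simp add: Ai_def A_def reg_mult gram_diff_mult[OF fin])
      then show ?thesis using As by simp
    qed
    have Aisi: "Ai *v si = c - v i *\<^sub>R z i"
      unfolding si_def c_def cross_diff[OF fin, symmetric] by (rule coercive_inv(1)[OF m coAi])
    have "Ai *v (si - s) = (z i \<bullet> s - v i) *\<^sub>R z i"
      by (simp add: matrix_vector_mult_diff_distrib Aisi Ais algebra_simps)
    then have "matrix_inv Ai *v (Ai *v (si - s)) = (z i \<bullet> s - v i) *\<^sub>R (matrix_inv Ai *v z i)"
      by (simp add: matrix_vector_mult_scaleR)
    then have sis: "si - s = (z i \<bullet> s - v i) *\<^sub>R (matrix_inv Ai *v z i)"
      using coercive_inv(2)[OF m coAi] by simp
    define g where "g = z i \<bullet> (matrix_inv Ai *v z i)"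
    have dd: "delta_loo z v lam n i - delta_full z v lam n i = (z i \<bullet> s - v i) * g"
    proof -
      have "delta_loo z v lam n i - delta_full z v lam n i = z i \<bullet> (si - s)"
        by (simp add: delta_loo_def delta_full_def si_def s_def Ai_def A_def c_def inner_diff_right)
      then show ?thesis by (simp add: sis g_def)
    qed
    have gb: "\<bar>g\<bar> \<le> (norm (z i))\<^sup>2 / m"
    proof -
      have "\<bar>g\<bar> \<le> norm (z i) * norm (matrix_inv Ai *v z i)" unfolding g_def by (rule Cauchy_Schwarz_ineq2)
      also have "\<dots> \<le> norm (z i) * (norm (z i) / m)"
        by (intro mult_left_mono coercive_inv(3)[OF m coAi]) auto
      finally show ?thesis by (simp add: power2_eq_square)
    qed
    have g2: "g\<^sup>2 \<le> (Mz / m)\<^sup>2"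
    proof -
      have "\<bar>g\<bar> \<le> Mz / m" using gb zb[OF i] m by (smt (verit) divide_right_mono)
      then show ?thesis by (rule sq_le_of_abs)
    qed
    have g2b: "g\<^sup>2 \<le> (Mz / m) * ((norm (z i))\<^sup>2 / m)"
    proof -
      have "\<bar>g\<bar> \<le> Mz / m" using gb zb[OF i] m by (smt (verit) divide_right_mono)
      then have "\<bar>g\<bar> * \<bar>g\<bar> \<le> (Mz / m) * ((norm (z i))\<^sup>2 / m)"
        using gb by (intro mult_mono) auto
      then show ?thesis by (simp add: power2_eq_square abs_mult_self_eq)
    qed
    have zs: "(z i \<bullet> s)\<^sup>2 \<le> (norm c)\<^sup>2 * (norm (z i))\<^sup>2 / m\<^sup>2"
    proof -
      have "\<bar>z i \<bullet> s\<bar> \<le> norm (z i) * (norm c / m)"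
        using Cauchy_Schwarz_ineq2[of "z i" s] sn by (meson mult_left_mono norm_ge_zero order_trans)
      then have "(z i \<bullet> s)\<^sup>2 \<le> (norm (z i) * (norm c / m))\<^sup>2"
        by (rule sq_le_of_abs)
      then show ?thesis by (simp add: power_mult_distrib power_divide mult.commute)
    qed
    have "(delta_loo z v lam n i - delta_full z v lam n i)\<^sup>2 = ((z i \<bullet> s) - v i)\<^sup>2 * g\<^sup>2"
      by (simp add: dd power_mult_distrib)
    also have "\<dots> \<le> (2 * (z i \<bullet> s)\<^sup>2 + 2 * (v i)\<^sup>2) * g\<^sup>2"
      by (intro mult_right_mono sq_diff_le) simp
    also have "\<dots> = 2 * ((z i \<bullet> s)\<^sup>2 * g\<^sup>2) + 2 * ((v i)\<^sup>2 * g\<^sup>2)" by (simp add: algebra_simps)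
    also have "\<dots> \<le> 2 * ((norm c)\<^sup>2 * (norm (z i))\<^sup>2 / m\<^sup>2 * (Mz / m)\<^sup>2) + 2 * ((v i)\<^sup>2 * ((Mz / m) * ((norm (z i))\<^sup>2 / m)))"
      by (intro add_mono mult_left_mono mult_mono zs g2 g2b) auto
    also have "\<dots> = 2 * (Mz / m)\<^sup>2 * ((norm c)\<^sup>2 * (norm (z i))\<^sup>2) / m\<^sup>2 + 2 * (Mz / m\<^sup>2) * ((v i)\<^sup>2 * (norm (z i))\<^sup>2)"
      by (simp add: power2_eq_square field_simps)
    finally show ?thesis .
  qed
  have "(\<Sum>i<n. (delta_loo z v lam n i - delta_full z v lam n i)\<^sup>2) \<le>
      (\<Sum>i<n. 2 * (Mz / m)\<^sup>2 * ((norm c)\<^sup>2 * (norm (z i))\<^sup>2) / m\<^sup>2 + 2 * (Mz / m\<^sup>2) * ((v i)\<^sup>2 * (norm (z i))\<^sup>2))"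
    by (intro sum_mono each) auto
  also have "\<dots> = 2 * (Mz / m)\<^sup>2 * ((norm c)\<^sup>2 * (\<Sum>i<n. (norm (z i))\<^sup>2)) / m\<^sup>2
        + 2 * (Mz / m\<^sup>2) * (\<Sum>i<n. (v i)\<^sup>2 * (norm (z i))\<^sup>2)"
    by (simp add: sum.distrib sum_distrib_left sum_divide_distrib)
  finally show ?thesis by (simp add: c_def)
qed


lemma normsq_sum: "(norm (x::real^'k))\<^sup>2 = (\<Sum>a\<in>UNIV. (x $ a)\<^sup>2)"
proof -
  have "(norm x)\<^sup>2 = x \<bullet> x" by (rule power2_norm_eq_inner)
  also have "\<dots> = (\<Sum>a\<in>UNIV. (x $ a)\<^sup>2)" by (simp add: inner_vec_def power2_eq_square)
  finally show ?thesis .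
qed

lemma sum_option: "(\<Sum>a\<in>(UNIV::'a::finite option set). f a) = f None + (\<Sum>k\<in>UNIV. f (Some k))"
proof -
  have "(\<Sum>a\<in>(UNIV::'a option set). f a) = (\<Sum>a\<in>insert None (range Some). f a)"
    by (simp add: UNIV_option_conv[symmetric])
  also have "\<dots> = f None + (\<Sum>a\<in>range Some. f a)" by (subst sum.insert) auto
  also have "(\<Sum>a\<in>range Some. f a) = (\<Sum>k\<in>UNIV. f (Some k))" by (subst sum.reindex) (auto simp: inj_on_def)
  finally show ?thesis .
qed

lemma zt_simps: "ztilde Gam x Em i $ None = 1" "ztilde Gam x Em i $ Some k = (transpose Gam *v x i) $ k + Em i k"
  by (simp_all add: ztilde_def)

lemma zt_case: "ztilde Gam x Em i $ a = (case a of None \<Rightarrow> 1 | Some k \<Rightarrow> (transpose Gam *v x i) $ k + Em i k)"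
  by (cases a) (simp_all add: zt_simps)

lemma zt_norm: "(norm (ztilde Gam x Em i))\<^sup>2 = 1 + (\<Sum>k\<in>UNIV. ((transpose Gam *v x i) $ k + Em i k)\<^sup>2)"
  by (simp add: normsq_sum sum_option zt_simps)

lemma sq_sum_le: "((a::real) + b)\<^sup>2 \<le> 2 * a\<^sup>2 + 2 * b\<^sup>2"
proof -
  have "0 \<le> (a - b)\<^sup>2" by simp
  then show ?thesis unfolding power2_diff power2_sum by linarith
qed

lemma pw1: "(norm (ztilde Gam x Em i))\<^sup>2 \<le> 1 + 2 * (\<Sum>k\<in>UNIV. ((transpose Gam *v x i) $ k)\<^sup>2) + 2 * (\<Sum>k\<in>UNIV. (Em i k)\<^sup>2)"
proof -
  have "(\<Sum>k\<in>UNIV. ((transpose Gam *v x i) $ k + Em i k)\<^sup>2) \<le> (\<Sum>k\<in>UNIV. 2 * ((transpose Gam *v x i) $ k)\<^sup>2 + 2 * (Em i k)\<^sup>2)"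
    by (intro sum_mono sq_sum_le)
  then show ?thesis unfolding zt_norm by (simp add: sum.distrib sum_distrib_left)
qed

lemma pw2: "e\<^sup>2 * (norm (ztilde Gam x Em i))\<^sup>2 \<le> e\<^sup>2 + 2 * (\<Sum>k\<in>UNIV. ((transpose Gam *v x i) $ k)\<^sup>2) * e\<^sup>2
    + (\<Sum>k\<in>UNIV. e ^ 4 + (Em i k) ^ 4)"
proof -
  have "e\<^sup>2 * (norm (ztilde Gam x Em i))\<^sup>2 \<le> e\<^sup>2 * (1 + 2 * (\<Sum>k\<in>UNIV. ((transpose Gam *v x i) $ k)\<^sup>2) + 2 * (\<Sum>k\<in>UNIV. (Em i k)\<^sup>2))"
    by (intro mult_left_mono pw1) auto
  also have "\<dots> = e\<^sup>2 + 2 * (\<Sum>k\<in>UNIV. ((transpose Gam *v x i) $ k)\<^sup>2) * e\<^sup>2 + (\<Sum>k\<in>UNIV. 2 * (e\<^sup>2 * (Em i k)\<^sup>2))"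
    by (simp add: algebra_simps sum_distrib_left)
  also have "(\<Sum>k\<in>UNIV. 2 * (e\<^sup>2 * (Em i k)\<^sup>2)) \<le> (\<Sum>k\<in>UNIV. e ^ 4 + (Em i k) ^ 4)"
  proof (intro sum_mono)
    fix k
    have "0 \<le> (e\<^sup>2 - (Em i k)\<^sup>2)\<^sup>2" by simp
    then show "2 * (e\<^sup>2 * (Em i k)\<^sup>2) \<le> e ^ 4 + (Em i k) ^ 4"
      unfolding power2_diff by (simp add: power_mult[symmetric] mult.assoc)
  qed
  finally show ?thesis by simp
qed

lemma pw3: "(norm (cross z v S))\<^sup>2 = (\<Sum>a\<in>UNIV. (\<Sum>j\<in>S. v j * z j $ a)\<^sup>2)"
  by (simp add: normsq_sum cross_def)

lemma final_arith:
  fixes n \<mu> d K Xc Yz Zs :: real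
  assumes n: "n > 0" and mu: "\<mu> > 0" and d: "0 \<le> d" "d \<le> 1" and K: "K \<ge> 0"
    and X: "0 \<le> Xc" "Xc \<le> K * n" and Y: "0 \<le> Yz" "Yz \<le> K * n" and Z: "0 \<le> Zs" "Zs \<le> K * n"
  shows "2 * ((d * n) / (\<mu> * n))\<^sup>2 * (Xc * Yz) / (\<mu> * n)\<^sup>2 + 2 * ((d * n) / (\<mu> * n)\<^sup>2) * Zs
     \<le> d * (2 * K\<^sup>2 / \<mu> ^ 4 + 2 * K / \<mu>\<^sup>2)"
proof -
  define a where "a = Xc / n"
  define b where "b = Yz / n"
  define c where "c = Zs / n"
  have ab: "0 \<le> a" "a \<le> K" "0 \<le> b" "b \<le> K" "0 \<le> c" "c \<le> K"
    using X Y Z n unfolding a_def b_def c_def by (auto simp: field_simps)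
  have eq: "2 * ((d * n) / (\<mu> * n))\<^sup>2 * (Xc * Yz) / (\<mu> * n)\<^sup>2 + 2 * ((d * n) / (\<mu> * n)\<^sup>2) * Zs
      = 2 * d\<^sup>2 * (a * b) / \<mu> ^ 4 + 2 * d * c / \<mu>\<^sup>2"
    unfolding a_def b_def c_def using n mu by (simp add: field_simps power2_eq_square power4_eq_xxxx)
  have "a * b \<le> K * K" using ab by (intro mult_mono) auto
  moreover have "d\<^sup>2 \<le> d" using d by (simp add: power2_eq_square mult_left_le_one_le)
  ultimately have "d\<^sup>2 * (a * b) \<le> d * K\<^sup>2" using ab d by (simp add: power2_eq_square mult_mono)
  then have "2 * d\<^sup>2 * (a * b) / \<mu> ^ 4 \<le> d * (2 * K\<^sup>2 / \<mu> ^ 4)" using mu by (simp add: divide_right_mono field_simps)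
  moreover have "c * d \<le> K * d" using ab d by (intro mult_right_mono) auto
  then have "2 * d * c / \<mu>\<^sup>2 \<le> d * (2 * K / \<mu>\<^sup>2)" using mu
    by (simp add: field_simps)
  ultimately show ?thesis unfolding eq by (simp add: distrib_left)
qed


lemma abs_prod_le_normsq: "\<bar>(v::real^'k) $ a\<bar> * \<bar>v $ b\<bar> \<le> (norm v)\<^sup>2"
proof -
  have "\<bar>v $ a\<bar> * \<bar>v $ b\<bar> \<le> norm v * norm v"
    by (intro mult_mono component_le_norm_cart) auto
  then show ?thesis by (simp add: power2_eq_square)
qed

lemma gram_lb:
  fixes z :: "nat \<Rightarrow> real^('p::finite option)" and cw e :: "nat \<Rightarrow> 'p \<Rightarrow> real"
  assumes z0: "\<And>i. z i $ None = 1" and zs: "\<And>i k. z i $ Some k = cw i k + e i k"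
    and Kw: "Kw \<ge> 0" "(\<Sum>i<n. \<Sum>k\<in>UNIV. (cw i k)\<^sup>2) \<le> Kw * real n" and sz: "sz > 0"
    and S1: "\<And>b. \<bar>\<Sum>i<n. e i b\<bar> \<le> \<delta> * real n"
    and S2: "\<And>a b. \<bar>\<Sum>i<n. cw i a * e i b\<bar> \<le> \<delta> * real n"
    and S3: "\<And>a b. \<bar>\<Sum>i<n. (e i a * e i b - (if a = b then sz else 0))\<bar> \<le> \<delta> * real n"
    and d0: "\<delta> \<ge> 0"
    and dsmall: "\<delta> * (3 * (real CARD('p))\<^sup>2 + 2 * real CARD('p)) \<le> min (sz / (2 * (Kw + sz)) / 2) (sz / 2) / 2"
  shows "min (sz / (2 * (Kw + sz)) / 2) (sz / 2) / 2 * real n * (norm v)\<^sup>2 \<le> v \<bullet> (gram z {..<n} *v v)"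
proof -
  define \<theta> where "\<theta> = sz / (2 * (Kw + sz))"
  define \<mu>0 where "\<mu>0 = min (\<theta> / 2) (sz / 2)"
  define p where "p = real CARD('p)"
  define N where "N = (norm v)\<^sup>2"
  define v0 where "v0 = v $ None"
  define u where "u = (\<lambda>k. v $ Some k)"
  define Uu where "Uu = (\<Sum>k\<in>UNIV. (u k)\<^sup>2)"
  define A where "A = (\<lambda>i. v0 + (\<Sum>k\<in>UNIV. cw i k * u k))"
  define B where "B = (\<lambda>i. \<Sum>k\<in>UNIV. e i k * u k)"
  have N0: "N \<ge> 0" unfolding N_def by simp
  have th: "0 \<le> \<theta>" "\<theta> \<le> 1" "\<theta> * Kw \<le> sz / 2" using sz Kw unfolding \<theta>_def by (auto simp: field_simps)
  have N: "N = v0\<^sup>2 + Uu"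
    unfolding N_def v0_def Uu_def u_def power2_norm_eq_inner inner_vec_def
    by (simp add: sum_option power2_eq_square)
  have zv: "z i \<bullet> v = A i + B i" for i
    unfolding inner_vec_def A_def B_def u_def v0_def
    by (simp add: sum_option z0 zs algebra_simps sum.distrib)
  have quad: "v \<bullet> (gram z {..<n} *v v) = (\<Sum>i<n. (A i + B i)\<^sup>2)"
    by (simp add: gram_quad zv)
  have exp: "(\<Sum>i<n. (A i + B i)\<^sup>2) = (\<Sum>i<n. (A i)\<^sup>2) + 2 * (\<Sum>i<n. A i * B i) + (\<Sum>i<n. (B i)\<^sup>2)"
    by (simp add: power2_sum sum.distrib sum_distrib_left mult.assoc)
  have Ai: "(A i)\<^sup>2 \<ge> v0\<^sup>2 / 2 - (\<Sum>k\<in>UNIV. (cw i k)\<^sup>2) * Uu" for i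
  proof -
    have cs: "(\<Sum>k\<in>UNIV. cw i k * u k)\<^sup>2 \<le> (\<Sum>k\<in>UNIV. (cw i k)\<^sup>2) * Uu"
      unfolding Uu_def by (rule Cauchy_Schwarz_ineq_sum)
    have "0 \<le> (v0 + 2 * (\<Sum>k\<in>UNIV. cw i k * u k))\<^sup>2" by simp
    then have "v0\<^sup>2 / 2 - (\<Sum>k\<in>UNIV. cw i k * u k)\<^sup>2 \<le> (A i)\<^sup>2"
      unfolding A_def by (simp add: power2_sum power2_eq_square algebra_simps)
    then show ?thesis using cs by linarith
  qed
  have SA: "(\<Sum>i<n. (A i)\<^sup>2) \<ge> real n * v0\<^sup>2 / 2 - Kw * real n * Uu"
  proof -
    have "(\<Sum>i<n. (A i)\<^sup>2) \<ge> (\<Sum>i<n. v0\<^sup>2 / 2 - (\<Sum>k\<in>UNIV. (cw i k)\<^sup>2) * Uu)"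
      using Ai by (intro sum_mono) auto
    moreover have "(\<Sum>i<n. v0\<^sup>2 / 2 - (\<Sum>k\<in>UNIV. (cw i k)\<^sup>2) * Uu) = real n * v0\<^sup>2 / 2 - (\<Sum>i<n. \<Sum>k\<in>UNIV. (cw i k)\<^sup>2) * Uu"
      by (simp add: sum_subtractf sum_distrib_right)
    moreover have "(\<Sum>i<n. \<Sum>k\<in>UNIV. (cw i k)\<^sup>2) * Uu \<le> Kw * real n * Uu"
      using Kw(2) by (intro mult_right_mono) (auto simp: Uu_def intro: sum_nonneg)
    ultimately show ?thesis by linarith
  qed
  define D where "D = (\<lambda>k l. \<Sum>i<n. (e i k * e i l - (if k = l then sz else 0)))"
  have SB_eq: "(\<Sum>i<n. (B i)\<^sup>2) = sz * real n * Uu + (\<Sum>k\<in>UNIV. \<Sum>l\<in>UNIV. u k * u l * D k l)"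
  proof -
    have "(\<Sum>i<n. (B i)\<^sup>2) = (\<Sum>i<n. \<Sum>k\<in>UNIV. \<Sum>l\<in>UNIV. u k * u l * (e i k * e i l))"
      unfolding B_def by (simp add: power2_eq_square sum_product algebra_simps)
    also have "\<dots> = (\<Sum>k\<in>UNIV. \<Sum>l\<in>UNIV. u k * u l * (\<Sum>i<n. e i k * e i l))"
      by (simp add: sum.swap[of _ "{..<n}"] sum_distrib_left)
    also have "\<dots> = (\<Sum>k\<in>UNIV. \<Sum>l\<in>UNIV. u k * u l * ((if k = l then sz * real n else 0) + D k l))"
      unfolding D_def by (intro sum.cong refl) (simp add: sum_subtractf)
    also have "\<dots> = (\<Sum>k\<in>UNIV. \<Sum>l\<in>UNIV. u k * u l * (if k = l then sz * real n else 0)) + (\<Sum>k\<in>UNIV. \<Sum>l\<in>UNIV. u k * u l * D k l)"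
      by (simp add: distrib_left sum.distrib)
    also have "(\<Sum>k\<in>UNIV. \<Sum>l\<in>UNIV. u k * u l * (if k = l then sz * real n else 0)) = sz * real n * Uu"
      unfolding Uu_def by (simp add: sum_distrib_left power2_eq_square algebra_simps if_distrib sum.delta cong: if_cong)
    finally show ?thesis .
  qed
  have uu: "\<bar>u k * u l\<bar> \<le> N" for k l
    unfolding u_def N_def using abs_prod_le_normsq[of v "Some k" "Some l"] by (simp add: abs_mult)
  have SB_err: "\<bar>\<Sum>k\<in>UNIV. \<Sum>l\<in>UNIV. u k * u l * D k l\<bar> \<le> p\<^sup>2 * (\<delta> * real n) * N"
  proof -
    have "\<bar>\<Sum>k\<in>UNIV. \<Sum>l\<in>UNIV. u k * u l * D k l\<bar> \<le> (\<Sum>k\<in>UNIV. \<Sum>l\<in>UNIV. \<bar>u k * u l * D k l\<bar>)"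
      by (rule order_trans[OF sum_abs]) (intro sum_mono sum_abs)
    also have "\<dots> \<le> (\<Sum>k\<in>(UNIV::'p set). \<Sum>l\<in>(UNIV::'p set). N * (\<delta> * real n))"
      unfolding abs_mult[of "u k * u l" for k l]
      using uu S3 N0 unfolding D_def by (intro sum_mono mult_mono) auto
    also have "\<dots> = p\<^sup>2 * (\<delta> * real n) * N" by (simp add: p_def power2_eq_square)
    finally show ?thesis .
  qed
  have AB_eq: "(\<Sum>i<n. A i * B i) = (\<Sum>k\<in>UNIV. u k * v0 * (\<Sum>i<n. e i k)) + (\<Sum>k\<in>UNIV. \<Sum>l\<in>UNIV. u k * u l * (\<Sum>i<n. cw i l * e i k))"
  proof -
    have "(\<Sum>i<n. A i * B i) = (\<Sum>i<n. \<Sum>k\<in>UNIV. u k * v0 * e i k) + (\<Sum>i<n. \<Sum>k\<in>UNIV. \<Sum>l\<in>UNIV. u k * u l * (cw i l * e i k))"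
      unfolding A_def B_def by (simp add: distrib_right sum.distrib sum_product sum_distrib_left algebra_simps)
    also have "\<dots> = (\<Sum>k\<in>UNIV. u k * v0 * (\<Sum>i<n. e i k)) + (\<Sum>k\<in>UNIV. \<Sum>l\<in>UNIV. u k * u l * (\<Sum>i<n. cw i l * e i k))"
      by (simp add: sum.swap[of _ "{..<n}"] sum_distrib_left)
    finally show ?thesis .
  qed
  have uv: "\<bar>u k * v0\<bar> \<le> N" for k
    unfolding u_def N_def v0_def using abs_prod_le_normsq[of v "Some k" None] by (simp add: abs_mult)
  have AB_err: "\<bar>\<Sum>i<n. A i * B i\<bar> \<le> (p + p\<^sup>2) * (\<delta> * real n) * N"
  proof -
    have e1: "\<bar>\<Sum>k\<in>UNIV. u k * v0 * (\<Sum>i<n. e i k)\<bar> \<le> p * (\<delta> * real n) * N"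
    proof -
      have "\<bar>\<Sum>k\<in>UNIV. u k * v0 * (\<Sum>i<n. e i k)\<bar> \<le> (\<Sum>k\<in>UNIV. \<bar>u k * v0\<bar> * \<bar>\<Sum>i<n. e i k\<bar>)"
        by (rule order_trans[OF sum_abs]) (simp add: abs_mult)
      also have "\<dots> \<le> (\<Sum>k\<in>(UNIV::'p set). N * (\<delta> * real n))"
        using uv S1 N0 by (intro sum_mono mult_mono) auto
      finally show ?thesis by (simp add: p_def mult_ac)
    qed
    have e2: "\<bar>\<Sum>k\<in>UNIV. \<Sum>l\<in>UNIV. u k * u l * (\<Sum>i<n. cw i l * e i k)\<bar> \<le> p\<^sup>2 * (\<delta> * real n) * N"
    proof -
      have "\<bar>\<Sum>k\<in>UNIV. \<Sum>l\<in>UNIV. u k * u l * (\<Sum>i<n. cw i l * e i k)\<bar> \<le> (\<Sum>k\<in>UNIV. \<Sum>l\<in>UNIV. \<bar>u k * u l * (\<Sum>i<n. cw i l * e i k)\<bar>)"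
        by (rule order_trans[OF sum_abs]) (intro sum_mono sum_abs)
      also have "\<dots> \<le> (\<Sum>k\<in>(UNIV::'p set). \<Sum>l\<in>(UNIV::'p set). N * (\<delta> * real n))"
        unfolding abs_mult[of "u k * u l" for k l]
        using uu S2 N0 by (intro sum_mono mult_mono) auto
      also have "\<dots> = p\<^sup>2 * (\<delta> * real n) * N" by (simp add: p_def power2_eq_square)
      finally show ?thesis .
    qed
    show ?thesis unfolding AB_eq using e1 e2 abs_triangle_ineq[of "\<Sum>k\<in>UNIV. u k * v0 * (\<Sum>i<n. e i k)"
        "\<Sum>k\<in>UNIV. \<Sum>l\<in>UNIV. u k * u l * (\<Sum>i<n. cw i l * e i k)"]
      by (simp add: algebra_simps)
  qed
  have SA0: "(\<Sum>i<n. (A i)\<^sup>2) \<ge> 0" by (intro sum_nonneg) auto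
  have "\<theta> * (\<Sum>i<n. (A i)\<^sup>2) \<le> (\<Sum>i<n. (A i)\<^sup>2)" using th SA0 by (simp add: mult_left_le_one_le)
  have thA: "\<theta> * (\<Sum>i<n. (A i)\<^sup>2) \<ge> \<theta> * (real n * v0\<^sup>2 / 2 - Kw * real n * Uu)"
    using SA th by (intro mult_left_mono) auto
  have n0: "real n \<ge> 0" by simp
  have Uu0: "Uu \<ge> 0" unfolding Uu_def by (intro sum_nonneg) auto
  have key: "\<theta> * (real n * v0\<^sup>2 / 2 - Kw * real n * Uu) + sz * real n * Uu \<ge> real n * (\<mu>0 * N)"
  proof -
    have "\<theta> * Kw * (real n * Uu) \<le> sz / 2 * (real n * Uu)" using th(3) n0 Uu0 by (intro mult_right_mono) auto
    moreover have "\<mu>0 * v0\<^sup>2 \<le> \<theta> / 2 * v0\<^sup>2" unfolding \<mu>0_def by (intro mult_right_mono) auto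
    moreover have "\<mu>0 * Uu \<le> sz / 2 * Uu" unfolding \<mu>0_def using Uu0 by (intro mult_right_mono) auto
    ultimately have "\<theta> * (real n * v0\<^sup>2 / 2 - Kw * real n * Uu) + sz * real n * Uu \<ge> real n * (\<mu>0 * v0\<^sup>2 + \<mu>0 * Uu)"
    proof -
      assume a1: "\<theta> * Kw * (real n * Uu) \<le> sz / 2 * (real n * Uu)" and a2: "\<mu>0 * v0\<^sup>2 \<le> \<theta> / 2 * v0\<^sup>2"
        and a3: "\<mu>0 * Uu \<le> sz / 2 * Uu"
      have "real n * (\<mu>0 * v0\<^sup>2 + \<mu>0 * Uu) \<le> real n * (\<theta> / 2 * v0\<^sup>2 + sz / 2 * Uu)"
        using a2 a3 n0 by (intro mult_left_mono) auto
      also have "\<dots> = \<theta> * (real n * v0\<^sup>2 / 2) + sz / 2 * (real n * Uu)" by (simp add: algebra_simps)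
      also have "\<dots> \<le> \<theta> * (real n * v0\<^sup>2 / 2 - Kw * real n * Uu) + sz * real n * Uu"
        using a1 by (simp add: algebra_simps)
      finally show ?thesis .
    qed
    then show ?thesis unfolding N by (simp add: algebra_simps)
  qed
  have err: "2 * ((p + p\<^sup>2) * (\<delta> * real n) * N) + p\<^sup>2 * (\<delta> * real n) * N = real n * (\<delta> * (3 * p\<^sup>2 + 2 * p) * N)"
    by (simp add: algebra_simps power2_eq_square)
  have dN: "real n * (\<delta> * (3 * p\<^sup>2 + 2 * p) * N) \<le> real n * (\<mu>0 / 2 * N)"
    using dsmall n0 unfolding \<mu>0_def \<theta>_def p_def N_def by (intro mult_left_mono mult_right_mono) auto
  have "v \<bullet> (gram z {..<n} *v v) \<ge> \<theta> * (\<Sum>i<n. (A i)\<^sup>2) + 2 * (\<Sum>i<n. A i * B i) + (\<Sum>i<n. (B i)\<^sup>2)"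
    unfolding quad exp using \<open>\<theta> * (\<Sum>i<n. (A i)\<^sup>2) \<le> (\<Sum>i<n. (A i)\<^sup>2)\<close> by linarith
  moreover have "2 * (\<Sum>i<n. A i * B i) \<ge> - 2 * ((p + p\<^sup>2) * (\<delta> * real n) * N)" using AB_err by linarith
  moreover have "(\<Sum>i<n. (B i)\<^sup>2) \<ge> sz * real n * Uu - p\<^sup>2 * (\<delta> * real n) * N" using SB_eq SB_err by linarith
  ultimately have "v \<bullet> (gram z {..<n} *v v) \<ge> real n * (\<mu>0 * N) - real n * (\<mu>0 / 2 * N)"
    using thA key err dN by linarith
  then show ?thesis unfolding \<mu>0_def \<theta>_def N_def by (simp add: algebra_simps)
qed


lemma Gam_bound: "\<exists>Kg>0. \<forall>x. norm (transpose (Gam::real^'p^'e) *v x) \<le> norm x * Kg"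
  using bounded_linear.pos_bounded[OF matrix_vector_mul_bounded_linear] by blast

lemma D1:
  fixes X :: "nat \<Rightarrow> nat \<Rightarrow> real^'e" and Gam :: "real^'p^'e"
  assumes lim: "(\<lambda>n. (1 / real n) *\<^sub>R gram (X n) {..<n}) \<longlonglongrightarrow> Sig"
  shows "\<exists>Kw\<ge>0. \<exists>N. \<forall>n\<ge>N. (\<Sum>i<n. (norm (transpose Gam *v X n i))\<^sup>2) \<le> Kw * real n"
proof -
  obtain Kg where Kg: "Kg > 0" "\<And>x. norm (transpose Gam *v x) \<le> norm x * Kg" using Gam_bound by blast
  define T where "T = (\<Sum>a\<in>UNIV. Sig $ a $ a)"
  have "(\<lambda>n. \<Sum>a\<in>UNIV. ((1 / real n) *\<^sub>R gram (X n) {..<n}) $ a $ a) \<longlonglongrightarrow> T"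
    unfolding T_def by (intro tendsto_sum tendsto_vec_nth lim)
  then have ev: "eventually (\<lambda>n. (\<Sum>a\<in>UNIV. ((1 / real n) *\<^sub>R gram (X n) {..<n}) $ a $ a) < T + 1) sequentially"
    by (rule order_tendstoD(2)) simp
  then obtain N0 where N0: "\<And>n. n \<ge> N0 \<Longrightarrow> (\<Sum>a\<in>UNIV. ((1 / real n) *\<^sub>R gram (X n) {..<n}) $ a $ a) < T + 1"
    unfolding eventually_sequentially by blast
  have tr: "(\<Sum>a\<in>UNIV. ((1 / real n) *\<^sub>R gram (X n) {..<n}) $ a $ a) = (1 / real n) * (\<Sum>i<n. (norm (X n i))\<^sup>2)" for n
    unfolding normsq_sum by (simp add: gram_def sum_distrib_left power2_eq_square sum.swap[of _ UNIV])
  show ?thesis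
  proof (intro exI conjI allI impI)
    show "Kg\<^sup>2 * (\<bar>T\<bar> + 1) \<ge> 0" by simp
    fix n assume n: "n \<ge> max N0 1"
    then have n1: "real n \<ge> 1" by simp
    have "(1 / real n) * (\<Sum>i<n. (norm (X n i))\<^sup>2) < T + 1" using N0[of n] n tr[of n] by simp
    then have sx0: "(\<Sum>i<n. (norm (X n i))\<^sup>2) < (T + 1) * real n" using n1 by (simp add: field_simps)
    have "(T + 1) * real n \<le> (\<bar>T\<bar> + 1) * real n" by (intro mult_right_mono) auto
    then have sx: "(\<Sum>i<n. (norm (X n i))\<^sup>2) \<le> (\<bar>T\<bar> + 1) * real n" using sx0 by linarith
    have "(\<Sum>i<n. (norm (transpose Gam *v X n i))\<^sup>2) \<le> (\<Sum>i<n. Kg\<^sup>2 * (norm (X n i))\<^sup>2)"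
    proof (intro sum_mono)
      fix i
      have "norm (transpose Gam *v X n i) \<le> norm (X n i) * Kg" by (rule Kg(2))
      then have "(norm (transpose Gam *v X n i))\<^sup>2 \<le> (norm (X n i) * Kg)\<^sup>2" by (intro power_mono) auto
      then show "(norm (transpose Gam *v X n i))\<^sup>2 \<le> Kg\<^sup>2 * (norm (X n i))\<^sup>2" by (simp add: power_mult_distrib mult.commute)
    qed
    also have "\<dots> = Kg\<^sup>2 * (\<Sum>i<n. (norm (X n i))\<^sup>2)" by (simp add: sum_distrib_left)
    also have "\<dots> \<le> Kg\<^sup>2 * ((\<bar>T\<bar> + 1) * real n)" using sx by (intro mult_left_mono) auto
    finally show "(\<Sum>i<n. (norm (transpose Gam *v X n i))\<^sup>2) \<le> Kg\<^sup>2 * (\<bar>T\<bar> + 1) * real n" by (simp add: mult.assoc)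
  qed
qed

lemma D2:
  fixes X :: "nat \<Rightarrow> nat \<Rightarrow> real^'e" and Gam :: "real^'p^'e"
  assumes o: "(\<lambda>n. MAX i\<in>{..<n}. norm (X n i)) \<in> o(\<lambda>n. real n powr (1/3))" and c: "c > 0"
  shows "\<exists>N. \<forall>n\<ge>N. \<forall>i<n. (norm (transpose Gam *v X n i))\<^sup>2 \<le> c * real n"
proof -
  obtain Kg where Kg: "Kg > 0" "\<And>x. norm (transpose Gam *v x) \<le> norm x * Kg" using Gam_bound by blast
  define c' where "c' = sqrt c / Kg"
  have c': "c' > 0" unfolding c'_def using c Kg by simp
  have "eventually (\<lambda>n. norm (MAX i\<in>{..<n}. norm (X n i)) \<le> c' * norm (real n powr (1/3))) sequentially"
    by (rule landau_o.smallD[OF o c'])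
  then obtain N0 where N0: "\<And>n. n \<ge> N0 \<Longrightarrow> norm (MAX i\<in>{..<n}. norm (X n i)) \<le> c' * norm (real n powr (1/3))"
    unfolding eventually_sequentially by blast
  show ?thesis
  proof (intro exI allI impI)
    fix n i assume n: "n \<ge> max N0 1" and i: "i < n"
    have n1: "real n \<ge> 1" using n by simp
    have "norm (X n i) \<le> (MAX i\<in>{..<n}. norm (X n i))" using i by (intro Max_ge) auto
    also have "\<dots> \<le> norm (MAX i\<in>{..<n}. norm (X n i))" by simp
    also have "\<dots> \<le> c' * real n powr (1/3)" using N0[of n] n by simp
    finally have xb: "norm (X n i) \<le> c' * real n powr (1/3)" .
    have "norm (transpose Gam *v X n i) \<le> c' * real n powr (1/3) * Kg"
      using Kg(2)[of "X n i"] xb Kg(1) by (meson mult_right_mono less_imp_le order_trans)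
    then have "(norm (transpose Gam *v X n i))\<^sup>2 \<le> (c' * real n powr (1/3) * Kg)\<^sup>2" by (intro power_mono) auto
    also have "\<dots> = c * (real n powr (1/3))\<^sup>2"
      unfolding c'_def using Kg(1) c by (simp add: power_mult_distrib power_divide)
    also have "(real n powr (1/3))\<^sup>2 = real n powr (2/3)"
      using n1 by (simp add: powr_powr[symmetric] power2_eq_square powr_add[symmetric])
    also have "\<dots> \<le> real n powr 1" using n1 by (intro powr_mono) auto
    finally show "(norm (transpose Gam *v X n i))\<^sup>2 \<le> c * real n" using n1 c by simp
  qed
qed

lemma gauss_moments:
  assumes D: "distributed M lborel X (normal_density 0 (sqrt s))" and s: "s > 0"
  shows "X \<in> borel_measurable M"
    "integrable M (\<lambda>\<omega>. X \<omega> ^ j)"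
    "(\<integral>\<omega>. X \<omega> \<partial>M) = 0"
    "(\<integral>\<omega>. (X \<omega>)\<^sup>2 \<partial>M) = s"
    "(\<integral>\<omega>. X \<omega> ^ 4 \<partial>M) = 3 * s\<^sup>2"
proof -
  show "X \<in> borel_measurable M" using distributed_measurable[OF D] by simp
  have sp: "sqrt s > 0" using s by simp
  show "integrable M (\<lambda>\<omega>. X \<omega> ^ j)"
  proof -
    have "integrable lborel (\<lambda>x. normal_density 0 (sqrt s) x * x ^ j)"
      using integrable_normal_moment[OF sp, where k=j and \<mu>=0] by simp
    then show ?thesis using distributed_integrable[OF D, of "\<lambda>x. x ^ j"] by simp
  qed
  have "(\<integral>\<omega>. X \<omega> \<partial>M) = (\<integral>x. normal_density 0 (sqrt s) x * x \<partial>lborel)"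
    using distributed_integral[OF D, of "\<lambda>x. x"] by simp
  also have "\<dots> = 0" using integral_normal_moment_odd[OF sp, of 0 0] by simp
  finally show "(\<integral>\<omega>. X \<omega> \<partial>M) = 0" .
  have "(\<integral>\<omega>. (X \<omega>)\<^sup>2 \<partial>M) = (\<integral>x. normal_density 0 (sqrt s) x * x\<^sup>2 \<partial>lborel)"
    using distributed_integral[OF D, of "\<lambda>x. x\<^sup>2"] by simp
  also have "\<dots> = s" using integral_normal_moment_even[OF sp, of 0 1] s by simp
  finally show "(\<integral>\<omega>. (X \<omega>)\<^sup>2 \<partial>M) = s" .
  have "(\<integral>\<omega>. X \<omega> ^ 4 \<partial>M) = (\<integral>x. normal_density 0 (sqrt s) x * x ^ 4 \<partial>lborel)"
    using distributed_integral[OF D, of "\<lambda>x. x ^ 4"] by simp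
  also have "\<dots> = 3 * s\<^sup>2" using integral_normal_moment_even[OF sp, of 0 2] s
    by (simp add: fact_numeral power2_eq_square field_simps)
  finally show "(\<integral>\<omega>. X \<omega> ^ 4 \<partial>M) = 3 * s\<^sup>2" .
qed
lemma int_prod:
  fixes f g :: "'w \<Rightarrow> real"
  assumes [measurable]: "f \<in> borel_measurable M" "g \<in> borel_measurable M"
    and "integrable M (\<lambda>x. (f x)\<^sup>2)" "integrable M (\<lambda>x. (g x)\<^sup>2)"
  shows "integrable M (\<lambda>x. f x * g x)"
proof (rule Bochner_Integration.integrable_bound[where f="\<lambda>x. (f x)\<^sup>2 + (g x)\<^sup>2"])
  show "integrable M (\<lambda>x. (f x)\<^sup>2 + (g x)\<^sup>2)" using assms by simp
  show "(\<lambda>x. f x * g x) \<in> borel_measurable M" by simp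
  show "AE x in M. norm (f x * g x) \<le> norm ((f x)\<^sup>2 + (g x)\<^sup>2)"
  proof (rule AE_I2)
    fix x
    have "0 \<le> (\<bar>f x\<bar> - \<bar>g x\<bar>)\<^sup>2" by simp
    then have "2 * (\<bar>f x\<bar> * \<bar>g x\<bar>) \<le> (f x)\<^sup>2 + (g x)\<^sup>2"
      by (simp add: power2_diff power2_abs mult.assoc)
    moreover have "\<bar>f x\<bar> * \<bar>g x\<bar> \<ge> 0" by simp
    ultimately have "\<bar>f x\<bar> * \<bar>g x\<bar> \<le> (f x)\<^sup>2 + (g x)\<^sup>2" by linarith
    then show "norm (f x * g x) \<le> norm ((f x)\<^sup>2 + (g x)\<^sup>2)"
      by (simp add: abs_mult)
  qed
qed

lemma sum_uncorr:
  fixes Y :: "'i \<Rightarrow> 'w \<Rightarrow> real"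
  assumes S: "finite S" and meas: "\<And>i. i \<in> S \<Longrightarrow> Y i \<in> borel_measurable M"
    and sq: "\<And>i. i \<in> S \<Longrightarrow> integrable M (\<lambda>x. (Y i x)\<^sup>2)"
    and unc: "\<And>i j. i \<in> S \<Longrightarrow> j \<in> S \<Longrightarrow> i \<noteq> j \<Longrightarrow> (\<integral>x. Y i x * Y j x \<partial>M) = 0"
  shows "integrable M (\<lambda>x. (\<Sum>i\<in>S. Y i x)\<^sup>2)"
    "(\<integral>x. (\<Sum>i\<in>S. Y i x)\<^sup>2 \<partial>M) = (\<Sum>i\<in>S. \<integral>x. (Y i x)\<^sup>2 \<partial>M)"
proof -
  have eq: "(\<lambda>x. (\<Sum>i\<in>S. Y i x)\<^sup>2) = (\<lambda>x. \<Sum>i\<in>S. \<Sum>j\<in>S. Y i x * Y j x)"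
    by (simp add: power2_eq_square sum_product)
  have ip: "integrable M (\<lambda>x. Y i x * Y j x)" if "i \<in> S" "j \<in> S" for i j
    using int_prod[OF meas[OF that(1)] meas[OF that(2)] sq[OF that(1)] sq[OF that(2)]] .
  show "integrable M (\<lambda>x. (\<Sum>i\<in>S. Y i x)\<^sup>2)"
    unfolding eq
    apply (rule Bochner_Integration.integrable_sum)
    apply (rule Bochner_Integration.integrable_sum)
    apply (rule ip)
    by auto
  have "(\<integral>x. (\<Sum>i\<in>S. Y i x)\<^sup>2 \<partial>M) = (\<Sum>i\<in>S. \<Sum>j\<in>S. \<integral>x. Y i x * Y j x \<partial>M)"
  proof -
    have "(\<integral>x. (\<Sum>i\<in>S. \<Sum>j\<in>S. Y i x * Y j x) \<partial>M) = (\<Sum>i\<in>S. \<integral>x. (\<Sum>j\<in>S. Y i x * Y j x) \<partial>M)"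
      apply (rule Bochner_Integration.integral_sum)
      apply (rule Bochner_Integration.integrable_sum)
      apply (rule ip) by auto
    also have "\<dots> = (\<Sum>i\<in>S. \<Sum>j\<in>S. \<integral>x. Y i x * Y j x \<partial>M)"
      apply (rule sum.cong[OF refl])
      apply (rule Bochner_Integration.integral_sum)
      apply (rule ip) by auto
    finally show ?thesis unfolding eq .
  qed
  also have "\<dots> = (\<Sum>i\<in>S. \<integral>x. Y i x * Y i x \<partial>M)"
  proof (rule sum.cong[OF refl])
    fix i assume i: "i \<in> S"
    have "(\<Sum>j\<in>S. \<integral>x. Y i x * Y j x \<partial>M) = (\<integral>x. Y i x * Y i x \<partial>M) + (\<Sum>j\<in>S-{i}. \<integral>x. Y i x * Y j x \<partial>M)"
      using S i by (simp add: sum.remove)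
    also have "(\<Sum>j\<in>S-{i}. \<integral>x. Y i x * Y j x \<partial>M) = 0"
      using unc i by (intro sum.neutral) auto
    finally show "(\<Sum>j\<in>S. \<integral>x. Y i x * Y j x \<partial>M) = (\<integral>x. Y i x * Y i x \<partial>M)" by simp
  qed
  finally show "(\<integral>x. (\<Sum>i\<in>S. Y i x)\<^sup>2 \<partial>M) = (\<Sum>i\<in>S. \<integral>x. (Y i x)\<^sup>2 \<partial>M)"
    by (simp add: power2_eq_square)
qed

lemma markov_gt:
  fixes U :: "'w \<Rightarrow> real"
  assumes "finite_measure M" "integrable M U" "\<And>x. x \<in> space M \<Longrightarrow> U x \<ge> 0" "t > 0"
  shows "measure M {x\<in>space M. U x > t} \<le> (\<integral>x. U x \<partial>M) / t"
proof -
  interpret finite_measure M by fact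
  have [measurable]: "U \<in> borel_measurable M" using assms(2) by auto
  have "measure M {x\<in>space M. U x > t} \<le> measure M {x\<in>space M. U x \<ge> t}"
    by (intro finite_measure_mono) auto
  also have "\<dots> \<le> (\<integral>x. U x \<partial>M) / t"
    using assms by (intro integral_Markov_inequality_measure[where A="space M"]) auto
  finally show ?thesis .
qed

lemma sq_gt: "0 \<le> (t::real) \<Longrightarrow> t < \<bar>s\<bar> \<Longrightarrow> t\<^sup>2 < s\<^sup>2"
proof -
  assume "0 \<le> t" "t < \<bar>s\<bar>"
  then have "t\<^sup>2 < \<bar>s\<bar>\<^sup>2" by (intro power_strict_mono) auto
  then show ?thesis by simp
qed

lemma cheb_sum:
  fixes Y :: "'i \<Rightarrow> 'w \<Rightarrow> real"
  assumes fm: "finite_measure M" and S: "finite S" and meas: "\<And>i. i \<in> S \<Longrightarrow> Y i \<in> borel_measurable M"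
    and sq: "\<And>i. i \<in> S \<Longrightarrow> integrable M (\<lambda>x. (Y i x)\<^sup>2)"
    and unc: "\<And>i j. i \<in> S \<Longrightarrow> j \<in> S \<Longrightarrow> i \<noteq> j \<Longrightarrow> (\<integral>x. Y i x * Y j x \<partial>M) = 0"
    and t: "t > 0"
  shows "measure M {x\<in>space M. \<bar>\<Sum>i\<in>S. Y i x\<bar> > t} \<le> (\<Sum>i\<in>S. \<integral>x. (Y i x)\<^sup>2 \<partial>M) / t\<^sup>2"
proof -
  interpret finite_measure M by fact
  have m: "(\<lambda>x. \<Sum>i\<in>S. Y i x) \<in> borel_measurable M" using meas by (intro borel_measurable_sum) auto
  have "measure M {x\<in>space M. \<bar>\<Sum>i\<in>S. Y i x\<bar> > t} \<le> measure M {x\<in>space M. (\<Sum>i\<in>S. Y i x)\<^sup>2 > t\<^sup>2}"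
  proof (rule finite_measure_mono)
    show "{x \<in> space M. t\<^sup>2 < (\<Sum>i\<in>S. Y i x)\<^sup>2} \<in> sets M" using m by measurable
    show "{x \<in> space M. t < \<bar>\<Sum>i\<in>S. Y i x\<bar>} \<subseteq> {x \<in> space M. t\<^sup>2 < (\<Sum>i\<in>S. Y i x)\<^sup>2}"
      using t sq_gt by auto
  qed
  also have "\<dots> \<le> (\<integral>x. (\<Sum>i\<in>S. Y i x)\<^sup>2 \<partial>M) / t\<^sup>2"
    using t by (intro markov_gt fm sum_uncorr(1)[OF S meas sq unc]) auto
  also have "\<dots> = (\<Sum>i\<in>S. \<integral>x. (Y i x)\<^sup>2 \<partial>M) / t\<^sup>2"
    using sum_uncorr(2)[OF S meas sq unc] by simp
  finally show ?thesis .
qed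


locale noise_setting = prob_space M for M :: "'w measure" +
  fixes En :: "nat \<Rightarrow> 'p::finite \<Rightarrow> 'w \<Rightarrow> real" and ep :: "nat \<Rightarrow> 'w \<Rightarrow> real"
    and n :: nat and sz se :: real
  assumes sz: "sz > 0" and se: "se > 0"
    and ind: "indep_vars (\<lambda>_. borel) (\<lambda>j. case j of Inl (i, k) \<Rightarrow> En i k | Inr i \<Rightarrow> ep i)
                (Inl ` ({..<n} \<times> UNIV) \<union> Inr ` {..<n})"
    and dE: "\<And>i k. i < n \<Longrightarrow> distributed M lborel (En i k) (normal_density 0 (sqrt sz))"
    and de: "\<And>i. i < n \<Longrightarrow> distributed M lborel (ep i) (normal_density 0 (sqrt se))"
begin

abbreviation "NX \<equiv> (\<lambda>j. case j of Inl (i, k) \<Rightarrow> En i k | Inr i \<Rightarrow> ep i)"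
abbreviation "Ix \<equiv> Inl ` ({..<n} \<times> (UNIV::'p set)) \<union> Inr ` {..<n}"

lemma mE: "i < n \<Longrightarrow> En i k \<in> borel_measurable M"
  using gauss_moments(1)[OF dE sz] .
lemma me: "i < n \<Longrightarrow> ep i \<in> borel_measurable M"
  using gauss_moments(1)[OF de se] .
lemma iE: "i < n \<Longrightarrow> integrable M (\<lambda>\<omega>. En i k \<omega> ^ j)"
  using gauss_moments(2)[OF dE sz] .
lemma ie: "i < n \<Longrightarrow> integrable M (\<lambda>\<omega>. ep i \<omega> ^ j)"
  using gauss_moments(2)[OF de se] .
lemma iE1: "i < n \<Longrightarrow> integrable M (En i k)"
  using iE[of i k 1] by simp
lemma ie1: "i < n \<Longrightarrow> integrable M (ep i)"
  using ie[of i 1] by simp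
lemma EE: "i < n \<Longrightarrow> (\<integral>\<omega>. En i k \<omega> \<partial>M) = 0" "i < n \<Longrightarrow> (\<integral>\<omega>. (En i k \<omega>)\<^sup>2 \<partial>M) = sz"
  "i < n \<Longrightarrow> (\<integral>\<omega>. En i k \<omega> ^ 4 \<partial>M) = 3 * sz\<^sup>2"
  using gauss_moments(3-5)[OF dE sz] by auto
lemma Ee: "i < n \<Longrightarrow> (\<integral>\<omega>. ep i \<omega> \<partial>M) = 0" "i < n \<Longrightarrow> (\<integral>\<omega>. (ep i \<omega>)\<^sup>2 \<partial>M) = se"
  "i < n \<Longrightarrow> (\<integral>\<omega>. ep i \<omega> ^ 4 \<partial>M) = 3 * se\<^sup>2"
  using gauss_moments(3-5)[OF de se] by auto

lemma indep_prod:
  fixes F G :: "(nat \<times> 'p + nat \<Rightarrow> real) \<Rightarrow> real"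
  assumes JK: "J \<subseteq> Ix" "K \<subseteq> Ix" "J \<inter> K = {}"
    and F: "F \<in> borel_measurable (PiM J (\<lambda>_. borel))" and G: "G \<in> borel_measurable (PiM K (\<lambda>_. borel))"
    and iF: "integrable M (\<lambda>\<omega>. F (restrict (\<lambda>t. NX t \<omega>) J))"
    and iG: "integrable M (\<lambda>\<omega>. G (restrict (\<lambda>t. NX t \<omega>) K))"
  shows "integrable M (\<lambda>\<omega>. F (restrict (\<lambda>t. NX t \<omega>) J) * G (restrict (\<lambda>t. NX t \<omega>) K))"
    "(\<integral>\<omega>. F (restrict (\<lambda>t. NX t \<omega>) J) * G (restrict (\<lambda>t. NX t \<omega>) K) \<partial>M)
       = (\<integral>\<omega>. F (restrict (\<lambda>t. NX t \<omega>) J) \<partial>M) * (\<integral>\<omega>. G (restrict (\<lambda>t. NX t \<omega>) K) \<partial>M)"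
proof -
  have iv: "indep_var (PiM J (\<lambda>_. borel)) (\<lambda>\<omega>. restrict (\<lambda>t. NX t \<omega>) J) (PiM K (\<lambda>_. borel)) (\<lambda>\<omega>. restrict (\<lambda>t. NX t \<omega>) K)"
    by (rule indep_var_restrict[OF ind JK(3) JK(1) JK(2)])
  have iv2: "indep_var borel (F \<circ> (\<lambda>\<omega>. restrict (\<lambda>t. NX t \<omega>) J)) borel (G \<circ> (\<lambda>\<omega>. restrict (\<lambda>t. NX t \<omega>) K))"
    by (rule indep_var_compose[OF iv F G])
  then have iv3: "indep_var borel (\<lambda>\<omega>. F (restrict (\<lambda>t. NX t \<omega>) J)) borel (\<lambda>\<omega>. G (restrict (\<lambda>t. NX t \<omega>) K))"
    by (simp add: comp_def)
  show "integrable M (\<lambda>\<omega>. F (restrict (\<lambda>t. NX t \<omega>) J) * G (restrict (\<lambda>t. NX t \<omega>) K))"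
    using indep_var_integrable[OF iv3] iF iG by blast
  show "(\<integral>\<omega>. F (restrict (\<lambda>t. NX t \<omega>) J) * G (restrict (\<lambda>t. NX t \<omega>) K) \<partial>M)
       = (\<integral>\<omega>. F (restrict (\<lambda>t. NX t \<omega>) J) \<partial>M) * (\<integral>\<omega>. G (restrict (\<lambda>t. NX t \<omega>) K) \<partial>M)"
    by (rule indep_var_lebesgue_integral[OF iv3 iF iG])
qed

lemma indep_pair:
  fixes f g :: "real \<Rightarrow> real"
  assumes "s \<in> Ix" "t \<in> Ix" "s \<noteq> t" "integrable M (\<lambda>\<omega>. f (NX s \<omega>))" "integrable M (\<lambda>\<omega>. g (NX t \<omega>))"
    "f \<in> borel_measurable borel" "g \<in> borel_measurable borel"
  shows "integrable M (\<lambda>\<omega>. f (NX s \<omega>) * g (NX t \<omega>))"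
    "(\<integral>\<omega>. f (NX s \<omega>) * g (NX t \<omega>) \<partial>M) = (\<integral>\<omega>. f (NX s \<omega>) \<partial>M) * (\<integral>\<omega>. g (NX t \<omega>) \<partial>M)"
proof -
  have F: "(\<lambda>r. f (r s)) \<in> borel_measurable (PiM {s} (\<lambda>_. borel))"
    using assms(6) by measurable
  have G: "(\<lambda>r. g (r t)) \<in> borel_measurable (PiM {t} (\<lambda>_. borel))"
    using assms(7) by measurable
  have H: "{s} \<subseteq> Ix" "{t} \<subseteq> Ix" "{s} \<inter> {t} = {}"
    using assms(1-3) by auto
  note * = indep_prod[OF H F G]
  show "integrable M (\<lambda>\<omega>. f (NX s \<omega>) * g (NX t \<omega>))"
    using *(1) assms by auto
  show "(\<integral>\<omega>. f (NX s \<omega>) * g (NX t \<omega>) \<partial>M) = (\<integral>\<omega>. f (NX s \<omega>) \<partial>M) * (\<integral>\<omega>. g (NX t \<omega>) \<partial>M)"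
    using *(2) assms by auto
qed

lemma NX_simps[simp]: "NX (Inl (i, k)) = En i k" "NX (Inr i) = ep i" by auto

lemma Ix_mem[simp]: "Inl (i, k) \<in> Ix \<longleftrightarrow> i < n" "Inr i \<in> Ix \<longleftrightarrow> i < n" by auto

lemma fm: "finite_measure M" by unfold_locales

lemma P_lin:
  assumes t: "t > 0"
  shows "measure M {\<omega>\<in>space M. \<bar>\<Sum>i<n. cc i * En i b \<omega>\<bar> > t} \<le> sz * (\<Sum>i<n. (cc i)\<^sup>2) / t\<^sup>2"
proof -
  have meas: "(\<lambda>\<omega>. cc i * En i b \<omega>) \<in> borel_measurable M" if "i \<in> {..<n}" for i
    using mE[of i b] that by simp
  have sq: "integrable M (\<lambda>\<omega>. (cc i * En i b \<omega>)\<^sup>2)" if "i \<in> {..<n}" for i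
    using iE[of i b 2] that by (simp add: power_mult_distrib)
  have unc: "(\<integral>\<omega>. cc i * En i b \<omega> * (cc j * En j b \<omega>) \<partial>M) = 0"
    if "i \<in> {..<n}" "j \<in> {..<n}" "i \<noteq> j" for i j
  proof -
    have "(\<integral>\<omega>. En i b \<omega> * En j b \<omega> \<partial>M) = (\<integral>\<omega>. En i b \<omega> \<partial>M) * (\<integral>\<omega>. En j b \<omega> \<partial>M)"
      using indep_pair(2)[of "Inl (i, b)" "Inl (j, b)" "\<lambda>x. x" "\<lambda>x. x"] that iE1 by auto
    also have "\<dots> = 0" using EE(1) that by simp
    finally have "(\<integral>\<omega>. En i b \<omega> * En j b \<omega> \<partial>M) = 0" .
    moreover have "(\<lambda>\<omega>. cc i * En i b \<omega> * (cc j * En j b \<omega>)) = (\<lambda>\<omega>. (cc i * cc j) * (En i b \<omega> * En j b \<omega>))"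
      by (auto simp: fun_eq_iff ac_simps)
    ultimately show ?thesis by simp
  qed
  have "measure M {\<omega>\<in>space M. \<bar>\<Sum>i\<in>{..<n}. cc i * En i b \<omega>\<bar> > t}
      \<le> (\<Sum>i\<in>{..<n}. \<integral>\<omega>. (cc i * En i b \<omega>)\<^sup>2 \<partial>M) / t\<^sup>2"
    by (rule cheb_sum[OF fm _ meas sq unc t]) auto
  also have "(\<Sum>i\<in>{..<n}. \<integral>\<omega>. (cc i * En i b \<omega>)\<^sup>2 \<partial>M) = (\<Sum>i<n. sz * (cc i)\<^sup>2)"
    using EE(2) by (intro sum.cong) (auto simp: power_mult_distrib)
  finally show ?thesis by (simp add: sum_distrib_left)
qed

lemma int_sq_of_prod:
  assumes "i < n" "a \<noteq> b"
  shows "integrable M (\<lambda>\<omega>. (En i a \<omega> * En i b \<omega>)\<^sup>2)"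
    "(\<integral>\<omega>. (En i a \<omega> * En i b \<omega>)\<^sup>2 \<partial>M) = sz\<^sup>2"
proof -
  have *: "integrable M (\<lambda>\<omega>. (En i a \<omega>)\<^sup>2 * (En i b \<omega>)\<^sup>2)"
    "(\<integral>\<omega>. (En i a \<omega>)\<^sup>2 * (En i b \<omega>)\<^sup>2 \<partial>M) = (\<integral>\<omega>. (En i a \<omega>)\<^sup>2 \<partial>M) * (\<integral>\<omega>. (En i b \<omega>)\<^sup>2 \<partial>M)"
    using indep_pair[of "Inl (i, a)" "Inl (i, b)" "\<lambda>x. x\<^sup>2" "\<lambda>x. x\<^sup>2"] assms iE by auto
  show "integrable M (\<lambda>\<omega>. (En i a \<omega> * En i b \<omega>)\<^sup>2)" using *(1) by (simp add: power_mult_distrib)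
  have e: "(\<lambda>\<omega>. (En i a \<omega> * En i b \<omega>)\<^sup>2) = (\<lambda>\<omega>. (En i a \<omega>)\<^sup>2 * (En i b \<omega>)\<^sup>2)"
    by (simp add: power_mult_distrib)
  show "(\<integral>\<omega>. (En i a \<omega> * En i b \<omega>)\<^sup>2 \<partial>M) = sz\<^sup>2"
    unfolding e *(2) EE(2)[OF assms(1)] by (simp add: power2_eq_square)
qed

lemma P_S3:
  assumes t: "t > 0"
  shows "measure M {\<omega>\<in>space M. \<bar>\<Sum>i<n. (En i a \<omega> * En i b \<omega> - (if a = b then sz else 0))\<bar> > t}
     \<le> real n * (2 * sz\<^sup>2) / t\<^sup>2"
proof -
  define d where "d = (if a = b then sz else 0)"
  define Y where "Y = (\<lambda>i \<omega>. En i a \<omega> * En i b \<omega> - d)"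
  have meas: "Y i \<in> borel_measurable M" if "i \<in> {..<n}" for i
    using mE[of i a] mE[of i b] that unfolding Y_def by simp
  have iprod: "integrable M (\<lambda>\<omega>. En i a \<omega> * En i b \<omega>)" if "i < n" for i
    using int_prod[OF mE[OF that] mE[OF that] iE[OF that, of a 2] iE[OF that, of b 2]] by simp
  have iY: "integrable M (Y i)" if "i < n" for i
    unfolding Y_def using iprod[OF that] by simp
  have EY: "(\<integral>\<omega>. Y i \<omega> \<partial>M) = 0" if "i < n" for i
  proof (cases "a = b")
    case True
    then show ?thesis using EE(2)[OF that, of b] iprod[OF that] unfolding Y_def d_def
      by (simp add: power2_eq_square prob_space)
  next
    case False
    have "(\<integral>\<omega>. En i a \<omega> * En i b \<omega> \<partial>M) = (\<integral>\<omega>. En i a \<omega> \<partial>M) * (\<integral>\<omega>. En i b \<omega> \<partial>M)"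
      using indep_pair(2)[of "Inl (i, a)" "Inl (i, b)" "\<lambda>x. x" "\<lambda>x. x"] that iE1 False by auto
    then show ?thesis using False EE(1)[OF that] iprod[OF that] unfolding Y_def d_def by simp
  qed
  have sqY: "integrable M (\<lambda>\<omega>. (Y i \<omega>)\<^sup>2) \<and> (\<integral>\<omega>. (Y i \<omega>)\<^sup>2 \<partial>M) \<le> 2 * sz\<^sup>2" if "i < n" for i
  proof (cases "a = b")
    case True
    have eq: "(\<lambda>\<omega>. (Y i \<omega>)\<^sup>2) = (\<lambda>\<omega>. En i b \<omega> ^ 4 - 2 * sz * (En i b \<omega>)\<^sup>2 + sz\<^sup>2)"
      unfolding Y_def d_def using True by (auto simp: fun_eq_iff power2_eq_square power4_eq_xxxx algebra_simps)
    have i4: "integrable M (\<lambda>\<omega>. En i b \<omega> ^ 4)" "integrable M (\<lambda>\<omega>. (En i b \<omega>)\<^sup>2)"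
      using iE that by auto
    have "integrable M (\<lambda>\<omega>. En i b \<omega> ^ 4 - 2 * sz * (En i b \<omega>)\<^sup>2 + sz\<^sup>2)"
      using i4 by simp
    moreover have "(\<integral>\<omega>. En i b \<omega> ^ 4 - 2 * sz * (En i b \<omega>)\<^sup>2 + sz\<^sup>2 \<partial>M) = 2 * sz\<^sup>2"
      using i4 EE(2,3)[OF that, of b] by (simp add: prob_space power2_eq_square)
    ultimately show ?thesis unfolding eq by simp
  next
    case False
    then show ?thesis using int_sq_of_prod[OF that False] unfolding Y_def d_def by simp
  qed
  have unc: "(\<integral>\<omega>. Y i \<omega> * Y j \<omega> \<partial>M) = 0" if "i \<in> {..<n}" "j \<in> {..<n}" "i \<noteq> j" for i j
  proof -
    define F where "F = (\<lambda>r::nat \<times> 'p + nat \<Rightarrow> real. r (Inl (i, a)) * r (Inl (i, b)) - d)"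
    define G where "G = (\<lambda>r::nat \<times> 'p + nat \<Rightarrow> real. r (Inl (j, a)) * r (Inl (j, b)) - d)"
    have F: "F \<in> borel_measurable (PiM {Inl (i, a), Inl (i, b)} (\<lambda>_. borel))" unfolding F_def by measurable
    have G: "G \<in> borel_measurable (PiM {Inl (j, a), Inl (j, b)} (\<lambda>_. borel))" unfolding G_def by measurable
    have H: "{Inl (i, a), Inl (i, b)} \<subseteq> Ix" "{Inl (j, a), Inl (j, b)} \<subseteq> Ix"
      "{Inl (i, a), Inl (i, b)} \<inter> {Inl (j, a), Inl (j, b)} = {}" using that by auto
    have eF: "F (restrict (\<lambda>t. NX t \<omega>) {Inl (i, a), Inl (i, b)}) = Y i \<omega>" for \<omega>
      unfolding F_def Y_def by auto
    have eG: "G (restrict (\<lambda>t. NX t \<omega>) {Inl (j, a), Inl (j, b)}) = Y j \<omega>" for \<omega>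
      unfolding G_def Y_def by auto
    have "(\<integral>\<omega>. Y i \<omega> * Y j \<omega> \<partial>M) = (\<integral>\<omega>. Y i \<omega> \<partial>M) * (\<integral>\<omega>. Y j \<omega> \<partial>M)"
      using indep_prod(2)[OF H F G] iY that by (simp add: eF eG)
    then show ?thesis using EY that by simp
  qed
  have "measure M {\<omega>\<in>space M. \<bar>\<Sum>i\<in>{..<n}. Y i \<omega>\<bar> > t} \<le> (\<Sum>i\<in>{..<n}. \<integral>\<omega>. (Y i \<omega>)\<^sup>2 \<partial>M) / t\<^sup>2"
    by (rule cheb_sum[OF fm _ meas _ unc t]) (use sqY in auto)
  also have "\<dots> \<le> (\<Sum>i\<in>{..<n}. 2 * sz\<^sup>2) / t\<^sup>2"
    using sqY t by (intro divide_right_mono sum_mono) auto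
  finally show ?thesis unfolding Y_def d_def by simp
qed


lemma E_lin2:
  assumes "i < n"
  shows "integrable M (\<lambda>\<omega>. (c + En i k \<omega>)\<^sup>2)" "(\<integral>\<omega>. (c + En i k \<omega>)\<^sup>2 \<partial>M) = c\<^sup>2 + sz"
proof -
  have eq: "(\<lambda>\<omega>. (c + En i k \<omega>)\<^sup>2) = (\<lambda>\<omega>. c\<^sup>2 + 2 * c * En i k \<omega> + (En i k \<omega>)\<^sup>2)"
    by (auto simp: fun_eq_iff power2_eq_square algebra_simps)
  have i: "integrable M (En i k)" "integrable M (\<lambda>\<omega>. (En i k \<omega>)\<^sup>2)" using iE1 iE assms by auto
  show "integrable M (\<lambda>\<omega>. (c + En i k \<omega>)\<^sup>2)" unfolding eq using i by simp
  show "(\<integral>\<omega>. (c + En i k \<omega>)\<^sup>2 \<partial>M) = c\<^sup>2 + sz" unfolding eq using i EE[OF assms, of k]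
    by (simp add: prob_space)
qed

lemma row_facts:
  assumes "i < n"
  shows "integrable M (\<lambda>\<omega>. ep i \<omega> * (c + En i k \<omega>))" "(\<integral>\<omega>. ep i \<omega> * (c + En i k \<omega>) \<partial>M) = 0"
    "integrable M (\<lambda>\<omega>. (ep i \<omega> * (c + En i k \<omega>))\<^sup>2)"
    "(\<integral>\<omega>. (ep i \<omega> * (c + En i k \<omega>))\<^sup>2 \<partial>M) = se * (c\<^sup>2 + sz)"
proof -
  have ic: "integrable M (\<lambda>\<omega>. c + En i k \<omega>)" using iE1[OF assms] by simp
  note p1 = indep_pair[of "Inr i" "Inl (i, k)" "\<lambda>x. x" "\<lambda>x. c + x"]
  show "integrable M (\<lambda>\<omega>. ep i \<omega> * (c + En i k \<omega>))" using p1(1) assms ie1 ic by auto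
  show "(\<integral>\<omega>. ep i \<omega> * (c + En i k \<omega>) \<partial>M) = 0" using p1(2) assms ie1 ic Ee(1) by auto
  note p2 = indep_pair[of "Inr i" "Inl (i, k)" "\<lambda>x. x\<^sup>2" "\<lambda>x. (c + x)\<^sup>2"]
  have e: "(\<lambda>\<omega>. (ep i \<omega> * (c + En i k \<omega>))\<^sup>2) = (\<lambda>\<omega>. (ep i \<omega>)\<^sup>2 * (c + En i k \<omega>)\<^sup>2)"
    by (simp add: power_mult_distrib)
  show "integrable M (\<lambda>\<omega>. (ep i \<omega> * (c + En i k \<omega>))\<^sup>2)" unfolding e
    using p2(1) assms ie E_lin2 by auto
  show "(\<integral>\<omega>. (ep i \<omega> * (c + En i k \<omega>))\<^sup>2 \<partial>M) = se * (c\<^sup>2 + sz)" unfolding e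
    using p2(2) assms ie E_lin2 Ee(2) by auto
qed

lemma C_comp:
  "integrable M (\<lambda>\<omega>. (\<Sum>j<n. ep j \<omega> * (case a of None \<Rightarrow> 1 | Some k \<Rightarrow> cw j k + En j k \<omega>))\<^sup>2) \<and>
   (\<integral>\<omega>. (\<Sum>j<n. ep j \<omega> * (case a of None \<Rightarrow> 1 | Some k \<Rightarrow> cw j k + En j k \<omega>))\<^sup>2 \<partial>M)
     = (\<Sum>j<n. se * (case a of None \<Rightarrow> 1 | Some k \<Rightarrow> (cw j k)\<^sup>2 + sz))"
proof (cases a)
  case None
  have meas: "ep i \<in> borel_measurable M" if "i \<in> {..<n}" for i using me that by simp
  have sq: "integrable M (\<lambda>\<omega>. (ep i \<omega>)\<^sup>2)" if "i \<in> {..<n}" for i using ie that by simp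
  have unc: "(\<integral>\<omega>. ep i \<omega> * ep j \<omega> \<partial>M) = 0" if "i \<in> {..<n}" "j \<in> {..<n}" "i \<noteq> j" for i j
    using indep_pair(2)[of "Inr i" "Inr j" "\<lambda>x. x" "\<lambda>x. x"] that ie1 Ee(1) by auto
  note su = sum_uncorr[OF finite_lessThan meas sq unc]
  show ?thesis using su Ee(2) None by simp
next
  case (Some k)
  define Y where "Y = (\<lambda>j \<omega>. ep j \<omega> * (cw j k + En j k \<omega>))"
  have meas: "Y i \<in> borel_measurable M" if "i \<in> {..<n}" for i using me mE that unfolding Y_def by simp
  have sq: "integrable M (\<lambda>\<omega>. (Y i \<omega>)\<^sup>2)" if "i \<in> {..<n}" for i using row_facts(3) that unfolding Y_def by simp
  have unc: "(\<integral>\<omega>. Y i \<omega> * Y j \<omega> \<partial>M) = 0" if "i \<in> {..<n}" "j \<in> {..<n}" "i \<noteq> j" for i j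
  proof -
    define F where "F = (\<lambda>r::nat \<times> 'p + nat \<Rightarrow> real. r (Inr i) * (cw i k + r (Inl (i, k))))"
    define G where "G = (\<lambda>r::nat \<times> 'p + nat \<Rightarrow> real. r (Inr j) * (cw j k + r (Inl (j, k))))"
    have F: "F \<in> borel_measurable (PiM {Inr i, Inl (i, k)} (\<lambda>_. borel))" unfolding F_def by measurable
    have G: "G \<in> borel_measurable (PiM {Inr j, Inl (j, k)} (\<lambda>_. borel))" unfolding G_def by measurable
    have H: "{Inr i, Inl (i, k)} \<subseteq> Ix" "{Inr j, Inl (j, k)} \<subseteq> Ix"
      "{Inr i, Inl (i, k)} \<inter> {Inr j, Inl (j, k)} = {}" using that by auto
    have eF: "F (restrict (\<lambda>t. NX t \<omega>) {Inr i, Inl (i, k)}) = Y i \<omega>" for \<omega>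
      unfolding F_def Y_def by auto
    have eG: "G (restrict (\<lambda>t. NX t \<omega>) {Inr j, Inl (j, k)}) = Y j \<omega>" for \<omega>
      unfolding G_def Y_def by auto
    have iY: "integrable M (Y i)" "integrable M (Y j)" using row_facts(1) that unfolding Y_def by auto
    have "(\<integral>\<omega>. Y i \<omega> * Y j \<omega> \<partial>M) = (\<integral>\<omega>. Y i \<omega> \<partial>M) * (\<integral>\<omega>. Y j \<omega> \<partial>M)"
      using indep_prod(2)[OF H F G] iY by (simp add: eF eG)
    then show ?thesis using row_facts(2) that unfolding Y_def by simp
  qed
  note su = sum_uncorr[OF finite_lessThan meas sq unc]
  have "(\<Sum>j<n. \<integral>\<omega>. (Y j \<omega>)\<^sup>2 \<partial>M) = (\<Sum>j<n. se * ((cw j k)\<^sup>2 + sz))"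
    using row_facts(4) unfolding Y_def by (intro sum.cong) auto
  then show ?thesis using su Some unfolding Y_def by simp
qed

lemma P_C:
  assumes t: "t > 0"
  shows "measure M {\<omega>\<in>space M. (\<Sum>a\<in>UNIV. (\<Sum>j<n. ep j \<omega> * (case a of None \<Rightarrow> 1 | Some k \<Rightarrow> cw j k + En j k \<omega>))\<^sup>2) > t}
    \<le> (\<Sum>a\<in>UNIV. \<Sum>j<n. se * (case a of None \<Rightarrow> 1 | Some k \<Rightarrow> (cw j k)\<^sup>2 + sz)) / t"
proof -
  have i: "integrable M (\<lambda>\<omega>. \<Sum>a\<in>UNIV. (\<Sum>j<n. ep j \<omega> * (case a of None \<Rightarrow> 1 | Some k \<Rightarrow> cw j k + En j k \<omega>))\<^sup>2)"
    using C_comp by (intro Bochner_Integration.integrable_sum) auto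
  have e: "(\<integral>\<omega>. (\<Sum>a\<in>UNIV. (\<Sum>j<n. ep j \<omega> * (case a of None \<Rightarrow> 1 | Some k \<Rightarrow> cw j k + En j k \<omega>))\<^sup>2) \<partial>M)
     = (\<Sum>a\<in>UNIV. \<Sum>j<n. se * (case a of None \<Rightarrow> 1 | Some k \<Rightarrow> (cw j k)\<^sup>2 + sz))"
    using C_comp by (subst Bochner_Integration.integral_sum) auto
  have nn: "\<omega> \<in> space M \<Longrightarrow> 0 \<le> (\<Sum>a\<in>UNIV. (\<Sum>j<n. ep j \<omega> * (case a of None \<Rightarrow> 1 | Some k \<Rightarrow> cw j k + En j k \<omega>))\<^sup>2)" for \<omega>
    by (intro sum_nonneg) simp
  show ?thesis using markov_gt[OF fm i nn t] unfolding e by auto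
qed

lemma P_U1:
  assumes t: "t > 0"
  shows "measure M {\<omega>\<in>space M. (\<Sum>i<n. 1 + 2 * (\<Sum>k\<in>UNIV. (cw i k)\<^sup>2) + 2 * (\<Sum>k\<in>UNIV. (En i k \<omega>)\<^sup>2)) > t}
    \<le> (\<Sum>i<n. 1 + 2 * (\<Sum>k\<in>UNIV. (cw i k)\<^sup>2) + 2 * (real CARD('p) * sz)) / t"
proof -
  have ik: "integrable M (\<lambda>\<omega>. \<Sum>k\<in>UNIV. (En i k \<omega>)\<^sup>2)" if "i < n" for i
    using iE that by (intro Bochner_Integration.integrable_sum) auto
  have ek: "(\<integral>\<omega>. (\<Sum>k\<in>UNIV. (En i k \<omega>)\<^sup>2) \<partial>M) = real CARD('p) * sz" if "i < n" for i
    using iE that EE(2) by (subst Bochner_Integration.integral_sum) auto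
  have ii: "integrable M (\<lambda>\<omega>. 1 + 2 * (\<Sum>k\<in>UNIV. (cw i k)\<^sup>2) + 2 * (\<Sum>k\<in>UNIV. (En i k \<omega>)\<^sup>2))" if "i < n" for i
    using ik[OF that] by simp
  have i: "integrable M (\<lambda>\<omega>. \<Sum>i<n. 1 + 2 * (\<Sum>k\<in>UNIV. (cw i k)\<^sup>2) + 2 * (\<Sum>k\<in>UNIV. (En i k \<omega>)\<^sup>2))"
    using ii by (intro Bochner_Integration.integrable_sum) auto
  have e: "(\<integral>\<omega>. (\<Sum>i<n. 1 + 2 * (\<Sum>k\<in>UNIV. (cw i k)\<^sup>2) + 2 * (\<Sum>k\<in>UNIV. (En i k \<omega>)\<^sup>2)) \<partial>M)
      = (\<Sum>i<n. 1 + 2 * (\<Sum>k\<in>UNIV. (cw i k)\<^sup>2) + 2 * (real CARD('p) * sz))"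
  proof -
    have "(\<integral>\<omega>. (\<Sum>i<n. 1 + 2 * (\<Sum>k\<in>UNIV. (cw i k)\<^sup>2) + 2 * (\<Sum>k\<in>UNIV. (En i k \<omega>)\<^sup>2)) \<partial>M)
       = (\<Sum>i<n. (\<integral>\<omega>. 1 + 2 * (\<Sum>k\<in>UNIV. (cw i k)\<^sup>2) + 2 * (\<Sum>k\<in>UNIV. (En i k \<omega>)\<^sup>2) \<partial>M))"
      using ii by (subst Bochner_Integration.integral_sum) auto
    also have "\<dots> = (\<Sum>i<n. 1 + 2 * (\<Sum>k\<in>UNIV. (cw i k)\<^sup>2) + 2 * (real CARD('p) * sz))"
      using ik ek by (intro sum.cong refl) (simp add: prob_space)
    finally show ?thesis .
  qed
  have nn: "\<omega> \<in> space M \<Longrightarrow> 0 \<le> (\<Sum>i<n. 1 + 2 * (\<Sum>k\<in>UNIV. (cw i k)\<^sup>2) + 2 * (\<Sum>k\<in>UNIV. (En i k \<omega>)\<^sup>2))" for \<omega>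
    by (intro sum_nonneg add_nonneg_nonneg mult_nonneg_nonneg) auto
  show ?thesis using markov_gt[OF fm i nn t] unfolding e by auto
qed

lemma P_U2:
  assumes t: "t > 0"
  shows "measure M {\<omega>\<in>space M. (\<Sum>i<n. (ep i \<omega>)\<^sup>2 + 2 * (\<Sum>k\<in>UNIV. (cw i k)\<^sup>2) * (ep i \<omega>)\<^sup>2
        + (\<Sum>k\<in>UNIV. (ep i \<omega>) ^ 4 + (En i k \<omega>) ^ 4)) > t}
    \<le> (\<Sum>i<n. se + 2 * (\<Sum>k\<in>UNIV. (cw i k)\<^sup>2) * se + real CARD('p) * (3 * se\<^sup>2 + 3 * sz\<^sup>2)) / t"
proof -
  have ik: "integrable M (\<lambda>\<omega>. \<Sum>k\<in>UNIV. (ep i \<omega>) ^ 4 + (En i k \<omega>) ^ 4)" if "i < n" for i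
    using iE ie that by (intro Bochner_Integration.integrable_sum) auto
  have ek: "(\<integral>\<omega>. (\<Sum>k\<in>UNIV. (ep i \<omega>) ^ 4 + (En i k \<omega>) ^ 4) \<partial>M) = real CARD('p) * (3 * se\<^sup>2 + 3 * sz\<^sup>2)" if "i < n" for i
    using iE ie that EE(3) Ee(3) by (subst Bochner_Integration.integral_sum) auto
  have ie2: "integrable M (\<lambda>\<omega>. (ep i \<omega>)\<^sup>2)" if "i < n" for i using ie that by auto
  have ii: "integrable M (\<lambda>\<omega>. (ep i \<omega>)\<^sup>2 + 2 * (\<Sum>k\<in>UNIV. (cw i k)\<^sup>2) * (ep i \<omega>)\<^sup>2
        + (\<Sum>k\<in>UNIV. (ep i \<omega>) ^ 4 + (En i k \<omega>) ^ 4))" if "i < n" for i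
    using ik[OF that] ie2[OF that] by simp
  have i: "integrable M (\<lambda>\<omega>. \<Sum>i<n. (ep i \<omega>)\<^sup>2 + 2 * (\<Sum>k\<in>UNIV. (cw i k)\<^sup>2) * (ep i \<omega>)\<^sup>2
        + (\<Sum>k\<in>UNIV. (ep i \<omega>) ^ 4 + (En i k \<omega>) ^ 4))"
    using ii by (intro Bochner_Integration.integrable_sum) auto
  have e: "(\<integral>\<omega>. (\<Sum>i<n. (ep i \<omega>)\<^sup>2 + 2 * (\<Sum>k\<in>UNIV. (cw i k)\<^sup>2) * (ep i \<omega>)\<^sup>2
        + (\<Sum>k\<in>UNIV. (ep i \<omega>) ^ 4 + (En i k \<omega>) ^ 4)) \<partial>M)
      = (\<Sum>i<n. se + 2 * (\<Sum>k\<in>UNIV. (cw i k)\<^sup>2) * se + real CARD('p) * (3 * se\<^sup>2 + 3 * sz\<^sup>2))"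
  proof -
    have "(\<integral>\<omega>. (\<Sum>i<n. (ep i \<omega>)\<^sup>2 + 2 * (\<Sum>k\<in>UNIV. (cw i k)\<^sup>2) * (ep i \<omega>)\<^sup>2
        + (\<Sum>k\<in>UNIV. (ep i \<omega>) ^ 4 + (En i k \<omega>) ^ 4)) \<partial>M)
       = (\<Sum>i<n. (\<integral>\<omega>. (ep i \<omega>)\<^sup>2 + 2 * (\<Sum>k\<in>UNIV. (cw i k)\<^sup>2) * (ep i \<omega>)\<^sup>2
        + (\<Sum>k\<in>UNIV. (ep i \<omega>) ^ 4 + (En i k \<omega>) ^ 4) \<partial>M))"
      using ii by (subst Bochner_Integration.integral_sum) auto
    also have "\<dots> = (\<Sum>i<n. se + 2 * (\<Sum>k\<in>UNIV. (cw i k)\<^sup>2) * se + real CARD('p) * (3 * se\<^sup>2 + 3 * sz\<^sup>2))"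
      using ik ek ie2 Ee(2) by (intro sum.cong refl) simp
    finally show ?thesis .
  qed
  have nn: "\<omega> \<in> space M \<Longrightarrow> 0 \<le> (\<Sum>i<n. (ep i \<omega>)\<^sup>2 + 2 * (\<Sum>k\<in>UNIV. (cw i k)\<^sup>2) * (ep i \<omega>)\<^sup>2
        + (\<Sum>k\<in>UNIV. (ep i \<omega>) ^ 4 + (En i k \<omega>) ^ 4))" for \<omega>
    by (intro sum_nonneg add_nonneg_nonneg mult_nonneg_nonneg) auto
  show ?thesis using markov_gt[OF fm i nn t] unfolding e by auto
qed

lemma P_Mx:
  assumes t: "t > 0"
  shows "measure M {\<omega>\<in>space M. \<exists>i<n. \<exists>k. (En i k \<omega>)\<^sup>2 > t} \<le> real n * real CARD('p) * (3 * sz\<^sup>2) / t\<^sup>2"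
proof -
  define A where "A = (\<lambda>(i, k). {\<omega>\<in>space M. (En i k \<omega>)\<^sup>2 > t})"
  have eq: "{\<omega>\<in>space M. \<exists>i<n. \<exists>k. (En i k \<omega>)\<^sup>2 > t} = \<Union> (A ` ({..<n} \<times> UNIV))"
    unfolding A_def by auto
  have As: "A ` ({..<n} \<times> UNIV) \<subseteq> sets M"
  proof (rule image_subsetI)
    fix x assume "x \<in> {..<n} \<times> (UNIV::'p set)"
    then obtain i k where x: "x = (i, k)" "i < n" by auto
    then have [measurable]: "En i k \<in> borel_measurable M" using mE by auto
    have "A (i, k) = {\<omega>\<in>space M. (En i k \<omega>)\<^sup>2 > t}" unfolding A_def by simp
    also have "\<dots> \<in> sets M" by measurable
    finally show "A x \<in> sets M" unfolding x .
  qed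
  have each: "measure M (A (i, k)) \<le> 3 * sz\<^sup>2 / t\<^sup>2" if "i < n" for i k
  proof -
    have [measurable]: "En i k \<in> borel_measurable M" using mE that by auto
    have "measure M (A (i, k)) \<le> measure M {\<omega>\<in>space M. En i k \<omega> ^ 4 > t\<^sup>2}"
    proof (rule finite_measure_mono)
      show "{\<omega>\<in>space M. En i k \<omega> ^ 4 > t\<^sup>2} \<in> sets M" by measurable
      show "A (i, k) \<subseteq> {\<omega>\<in>space M. En i k \<omega> ^ 4 > t\<^sup>2}"
      proof
        fix \<omega> assume "\<omega> \<in> A (i, k)"
        then have "\<omega> \<in> space M" "t < (En i k \<omega>)\<^sup>2" unfolding A_def by auto
        then have "t\<^sup>2 < ((En i k \<omega>)\<^sup>2)\<^sup>2" using t by (intro power_strict_mono) auto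
        then show "\<omega> \<in> {\<omega>\<in>space M. En i k \<omega> ^ 4 > t\<^sup>2}" using \<open>\<omega> \<in> space M\<close>
          by (simp add: power_mult[symmetric])
      qed
    qed
    also have "\<dots> \<le> (\<integral>\<omega>. En i k \<omega> ^ 4 \<partial>M) / t\<^sup>2"
      using t iE[OF that] by (intro markov_gt fm) auto
    finally show ?thesis using EE(3)[OF that] by simp
  qed
  have "measure M {\<omega>\<in>space M. \<exists>i<n. \<exists>k. (En i k \<omega>)\<^sup>2 > t} \<le> (\<Sum>x\<in>{..<n} \<times> UNIV. measure M (A x))"
    unfolding eq by (rule finite_measure_subadditive_finite[OF _ As]) auto
  also have "\<dots> \<le> (\<Sum>x\<in>{..<n} \<times> (UNIV::'p set). 3 * sz\<^sup>2 / t\<^sup>2)"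
    using each by (intro sum_mono) auto
  also have "\<dots> = real n * real CARD('p) * (3 * sz\<^sup>2) / t\<^sup>2"
    by (simp add: card_cartesian_product)
  finally show ?thesis .
qed


lemma meas_lin: "(\<lambda>\<omega>. \<Sum>i<n. cc i * En i b \<omega>) \<in> borel_measurable M"
proof (rule borel_measurable_sum)
  fix i assume "i \<in> {..<n}"
  then have [measurable]: "En i b \<in> borel_measurable M" using mE by auto
  show "(\<lambda>\<omega>. cc i * En i b \<omega>) \<in> borel_measurable M" by measurable
qed

lemma meas_S3: "(\<lambda>\<omega>. \<Sum>i<n. (En i a \<omega> * En i b \<omega> - d)) \<in> borel_measurable M"
proof (rule borel_measurable_sum)
  fix i assume "i \<in> {..<n}"
  then have [measurable]: "En i b \<in> borel_measurable M" "En i a \<in> borel_measurable M" using mE by auto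
  show "(\<lambda>\<omega>. En i a \<omega> * En i b \<omega> - d) \<in> borel_measurable M" by measurable
qed

lemma sets_abs_gt: fixes f :: "'w \<Rightarrow> real" and t :: real
  assumes [measurable]: "f \<in> borel_measurable M" shows "{\<omega>\<in>space M. t < \<bar>f \<omega>\<bar>} \<in> sets M"
  by measurable
lemma sets_gt: fixes f :: "'w \<Rightarrow> real" and t :: real
  assumes [measurable]: "f \<in> borel_measurable M" shows "{\<omega>\<in>space M. t < f \<omega>} \<in> sets M"
  by measurable

lemma union_bound:
  assumes "finite I" "\<And>i. i \<in> I \<Longrightarrow> A i \<in> sets M" "\<And>i. i \<in> I \<Longrightarrow> measure M (A i) \<le> b i"
  shows "(\<Union>i\<in>I. A i) \<in> sets M" "measure M (\<Union>i\<in>I. A i) \<le> (\<Sum>i\<in>I. b i)"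
proof -
  show "(\<Union>i\<in>I. A i) \<in> sets M" using assms by auto
  have "measure M (\<Union>i\<in>I. A i) \<le> (\<Sum>i\<in>I. measure M (A i))"
    using assms by (intro finite_measure_subadditive_finite) auto
  also have "\<dots> \<le> (\<Sum>i\<in>I. b i)" using assms by (intro sum_mono) auto
  finally show "measure M (\<Union>i\<in>I. A i) \<le> (\<Sum>i\<in>I. b i)" .
qed

lemma bad_gram:
  fixes cw :: "nat \<Rightarrow> 'p \<Rightarrow> real"
  assumes t: "t > 0"
  shows "\<exists>B\<in>sets M. measure M B \<le> (real CARD('p) * sz * real n + real CARD('p) * sz * (\<Sum>i<n. \<Sum>a\<in>UNIV. (cw i a)\<^sup>2)
       + (real CARD('p))\<^sup>2 * (real n * (2 * sz\<^sup>2))) / t\<^sup>2 \<and>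
    (\<forall>\<omega>\<in>space M - B. (\<forall>b. \<bar>\<Sum>i<n. En i b \<omega>\<bar> \<le> t) \<and> (\<forall>a b. \<bar>\<Sum>i<n. cw i a * En i b \<omega>\<bar> \<le> t)
      \<and> (\<forall>a b. \<bar>\<Sum>i<n. (En i a \<omega> * En i b \<omega> - (if a = b then sz else 0))\<bar> \<le> t))"
proof -
  define B1 where "B1 = (\<Union>b\<in>(UNIV::'p set). {\<omega>\<in>space M. t < \<bar>\<Sum>i<n. 1 * En i b \<omega>\<bar>})"
  define B2 where "B2 = (\<Union>ab\<in>(UNIV::('p \<times> 'p) set). {\<omega>\<in>space M. t < \<bar>\<Sum>i<n. cw i (fst ab) * En i (snd ab) \<omega>\<bar>})"
  define B3 where "B3 = (\<Union>ab\<in>(UNIV::('p \<times> 'p) set). {\<omega>\<in>space M. t < \<bar>\<Sum>i<n. (En i (fst ab) \<omega> * En i (snd ab) \<omega> - (if fst ab = snd ab then sz else 0))\<bar>})"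
  have u1: "B1 \<in> sets M" "measure M B1 \<le> (\<Sum>b\<in>(UNIV::'p set). sz * (\<Sum>i<n. 1\<^sup>2) / t\<^sup>2)"
    unfolding B1_def
    by (rule union_bound, simp, rule sets_abs_gt, rule meas_lin, rule P_lin[OF t])+
  have u2: "B2 \<in> sets M" "measure M B2 \<le> (\<Sum>ab\<in>(UNIV::('p \<times> 'p) set). sz * (\<Sum>i<n. (cw i (fst ab))\<^sup>2) / t\<^sup>2)"
    unfolding B2_def
    by (rule union_bound, simp, rule sets_abs_gt, rule meas_lin, rule P_lin[OF t])+
  have u3: "B3 \<in> sets M" "measure M B3 \<le> (\<Sum>ab\<in>(UNIV::('p \<times> 'p) set). real n * (2 * sz\<^sup>2) / t\<^sup>2)"
    unfolding B3_def
    by (rule union_bound, simp, rule sets_abs_gt, rule meas_S3, rule P_S3[OF t])+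
  have s1: "(\<Sum>b\<in>(UNIV::'p set). sz * (\<Sum>i<n. 1\<^sup>2) / t\<^sup>2) = real CARD('p) * sz * real n / t\<^sup>2" by simp
  have s2: "(\<Sum>ab\<in>(UNIV::('p \<times> 'p) set). sz * (\<Sum>i<n. (cw i (fst ab))\<^sup>2) / t\<^sup>2)
      = real CARD('p) * sz * (\<Sum>i<n. \<Sum>a\<in>UNIV. (cw i a)\<^sup>2) / t\<^sup>2"
  proof -
    have "(\<Sum>ab\<in>(UNIV::('p \<times> 'p) set). sz * (\<Sum>i<n. (cw i (fst ab))\<^sup>2) / t\<^sup>2)
        = (\<Sum>a\<in>(UNIV::'p set). \<Sum>b\<in>(UNIV::'p set). sz * (\<Sum>i<n. (cw i a)\<^sup>2) / t\<^sup>2)"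
      unfolding UNIV_Times_UNIV[symmetric] sum.cartesian_product by (simp add: split_beta)
    also have "\<dots> = real CARD('p) * sz * (\<Sum>i<n. \<Sum>a\<in>UNIV. (cw i a)\<^sup>2) / t\<^sup>2"
      by (simp add: sum_divide_distrib[symmetric] sum_distrib_left[symmetric] sum.swap[of _ "{..<n}"])
    finally show ?thesis .
  qed
  have s3: "(\<Sum>ab\<in>(UNIV::('p \<times> 'p) set). real n * (2 * sz\<^sup>2) / t\<^sup>2) = (real CARD('p))\<^sup>2 * (real n * (2 * sz\<^sup>2)) / t\<^sup>2"
    by (simp add: UNIV_Times_UNIV[symmetric] card_cartesian_product power2_eq_square del: UNIV_Times_UNIV)
  show ?thesis
  proof (intro bexI conjI)
    show "B1 \<union> B2 \<union> B3 \<in> sets M" using u1 u2 u3 by auto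
    have "measure M (B1 \<union> B2 \<union> B3) \<le> measure M B1 + measure M B2 + measure M B3"
      using u1 u2 u3 by (meson add_right_mono measure_Un_le order_trans sets.Un)
    also have "\<dots> \<le> real CARD('p) * sz * real n / t\<^sup>2 + real CARD('p) * sz * (\<Sum>i<n. \<Sum>a\<in>UNIV. (cw i a)\<^sup>2) / t\<^sup>2
         + (real CARD('p))\<^sup>2 * (real n * (2 * sz\<^sup>2)) / t\<^sup>2"
      using u1 u2 u3 s1 s2 s3 by linarith
    finally show "measure M (B1 \<union> B2 \<union> B3) \<le> (real CARD('p) * sz * real n + real CARD('p) * sz * (\<Sum>i<n. \<Sum>a\<in>UNIV. (cw i a)\<^sup>2)
       + (real CARD('p))\<^sup>2 * (real n * (2 * sz\<^sup>2))) / t\<^sup>2" by (simp add: add_divide_distrib)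
    show "\<forall>\<omega>\<in>space M - (B1 \<union> B2 \<union> B3). (\<forall>b. \<bar>\<Sum>i<n. En i b \<omega>\<bar> \<le> t) \<and> (\<forall>a b. \<bar>\<Sum>i<n. cw i a * En i b \<omega>\<bar> \<le> t)
      \<and> (\<forall>a b. \<bar>\<Sum>i<n. (En i a \<omega> * En i b \<omega> - (if a = b then sz else 0))\<bar> \<le> t)"
      unfolding B1_def B2_def B3_def by (auto simp: not_less)
  qed
qed


lemma meas_C: "(\<lambda>\<omega>. \<Sum>a\<in>UNIV. (\<Sum>j<n. ep j \<omega> * (case a of None \<Rightarrow> 1 | Some k \<Rightarrow> cw j k + En j k \<omega>))\<^sup>2) \<in> borel_measurable M"
proof (rule borel_measurable_sum)
  fix a :: "'p option"
  have "(\<lambda>\<omega>. \<Sum>j<n. ep j \<omega> * (case a of None \<Rightarrow> 1 | Some k \<Rightarrow> cw j k + En j k \<omega>)) \<in> borel_measurable M"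
  proof (rule borel_measurable_sum)
    fix j assume "j \<in> {..<n}"
    then have [measurable]: "ep j \<in> borel_measurable M" "\<And>k. En j k \<in> borel_measurable M" using mE me by auto
    show "(\<lambda>\<omega>. ep j \<omega> * (case a of None \<Rightarrow> 1 | Some k \<Rightarrow> cw j k + En j k \<omega>)) \<in> borel_measurable M"
      by (cases a) simp_all
  qed
  then show "(\<lambda>\<omega>. (\<Sum>j<n. ep j \<omega> * (case a of None \<Rightarrow> 1 | Some k \<Rightarrow> cw j k + En j k \<omega>))\<^sup>2) \<in> borel_measurable M"
    by measurable
qed

lemma meas_U1: "(\<lambda>\<omega>. \<Sum>i<n. 1 + 2 * (\<Sum>k\<in>UNIV. (cw i k)\<^sup>2) + 2 * (\<Sum>k\<in>UNIV. (En i k \<omega>)\<^sup>2)) \<in> borel_measurable M"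
proof (rule borel_measurable_sum)
  fix i assume "i \<in> {..<n}"
  then have [measurable]: "\<And>k. En i k \<in> borel_measurable M" using mE by auto
  show "(\<lambda>\<omega>. 1 + 2 * (\<Sum>k\<in>UNIV. (cw i k)\<^sup>2) + 2 * (\<Sum>k\<in>UNIV. (En i k \<omega>)\<^sup>2)) \<in> borel_measurable M"
    by measurable
qed

lemma meas_U2: "(\<lambda>\<omega>. \<Sum>i<n. (ep i \<omega>)\<^sup>2 + 2 * (\<Sum>k\<in>UNIV. (cw i k)\<^sup>2) * (ep i \<omega>)\<^sup>2
        + (\<Sum>k\<in>UNIV. (ep i \<omega>) ^ 4 + (En i k \<omega>) ^ 4)) \<in> borel_measurable M"
proof (rule borel_measurable_sum)
  fix i assume "i \<in> {..<n}"
  then have [measurable]: "\<And>k. En i k \<in> borel_measurable M" "ep i \<in> borel_measurable M" using mE me by auto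
  show "(\<lambda>\<omega>. (ep i \<omega>)\<^sup>2 + 2 * (\<Sum>k\<in>UNIV. (cw i k)\<^sup>2) * (ep i \<omega>)\<^sup>2
        + (\<Sum>k\<in>UNIV. (ep i \<omega>) ^ 4 + (En i k \<omega>) ^ 4)) \<in> borel_measurable M"
    by measurable
qed

lemma bad_from:
  fixes f :: "'w \<Rightarrow> real"
  assumes "f \<in> borel_measurable M" "measure M {\<omega>\<in>space M. t < f \<omega>} \<le> b"
  shows "\<exists>B\<in>sets M. measure M B \<le> b \<and> (\<forall>\<omega>\<in>space M - B. f \<omega> \<le> t)"
  using assms sets_gt[OF assms(1)] by (intro bexI[of _ "{\<omega>\<in>space M. t < f \<omega>}"]) (auto simp: not_less)

lemma bad_C:
  assumes t: "t > 0"
  shows "\<exists>B\<in>sets M. measure M B \<le> (\<Sum>a\<in>UNIV. \<Sum>j<n. se * (case a of None \<Rightarrow> 1 | Some k \<Rightarrow> (cw j k)\<^sup>2 + sz)) / t \<and>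
    (\<forall>\<omega>\<in>space M - B. (\<Sum>a\<in>UNIV. (\<Sum>j<n. ep j \<omega> * (case a of None \<Rightarrow> 1 | Some k \<Rightarrow> cw j k + En j k \<omega>))\<^sup>2) \<le> t)"
  by (rule bad_from[OF meas_C P_C[OF t]])

lemma bad_U1:
  assumes t: "t > 0"
  shows "\<exists>B\<in>sets M. measure M B \<le> (\<Sum>i<n. 1 + 2 * (\<Sum>k\<in>UNIV. (cw i k)\<^sup>2) + 2 * (real CARD('p) * sz)) / t \<and>
    (\<forall>\<omega>\<in>space M - B. (\<Sum>i<n. 1 + 2 * (\<Sum>k\<in>UNIV. (cw i k)\<^sup>2) + 2 * (\<Sum>k\<in>UNIV. (En i k \<omega>)\<^sup>2)) \<le> t)"
  by (rule bad_from[OF meas_U1 P_U1[OF t]])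

lemma bad_U2:
  assumes t: "t > 0"
  shows "\<exists>B\<in>sets M. measure M B \<le> (\<Sum>i<n. se + 2 * (\<Sum>k\<in>UNIV. (cw i k)\<^sup>2) * se + real CARD('p) * (3 * se\<^sup>2 + 3 * sz\<^sup>2)) / t \<and>
    (\<forall>\<omega>\<in>space M - B. (\<Sum>i<n. (ep i \<omega>)\<^sup>2 + 2 * (\<Sum>k\<in>UNIV. (cw i k)\<^sup>2) * (ep i \<omega>)\<^sup>2
        + (\<Sum>k\<in>UNIV. (ep i \<omega>) ^ 4 + (En i k \<omega>) ^ 4)) \<le> t)"
  by (rule bad_from[OF meas_U2 P_U2[OF t]])

lemma bad_max:
  assumes t: "t > 0"
  shows "\<exists>B\<in>sets M. measure M B \<le> real n * real CARD('p) * (3 * sz\<^sup>2) / t\<^sup>2 \<and>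
    (\<forall>\<omega>\<in>space M - B. \<forall>i<n. \<forall>k. (En i k \<omega>)\<^sup>2 \<le> t)"
proof (intro bexI[of _ "{\<omega>\<in>space M. \<exists>i<n. \<exists>k. (En i k \<omega>)\<^sup>2 > t}"] conjI)
  show "measure M {\<omega>\<in>space M. \<exists>i<n. \<exists>k. (En i k \<omega>)\<^sup>2 > t} \<le> real n * real CARD('p) * (3 * sz\<^sup>2) / t\<^sup>2"
    by (rule P_Mx[OF t])
  show "\<forall>\<omega>\<in>space M - {\<omega>\<in>space M. \<exists>i<n. \<exists>k. (En i k \<omega>)\<^sup>2 > t}. \<forall>i<n. \<forall>k. (En i k \<omega>)\<^sup>2 \<le> t"
    by (auto simp: not_less) (meson not_less)
  have eq: "{\<omega>\<in>space M. \<exists>i<n. \<exists>k. (En i k \<omega>)\<^sup>2 > t} = (\<Union>ik\<in>{..<n} \<times> (UNIV::'p set). {\<omega>\<in>space M. (En (fst ik) (snd ik) \<omega>)\<^sup>2 > t})"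
    by auto blast+
  have "(\<Union>ik\<in>{..<n} \<times> (UNIV::'p set). {\<omega>\<in>space M. (En (fst ik) (snd ik) \<omega>)\<^sup>2 > t}) \<in> sets M"
  proof (intro sets.finite_UN)
    fix ik assume "ik \<in> {..<n} \<times> (UNIV::'p set)"
    then have [measurable]: "En (fst ik) (snd ik) \<in> borel_measurable M" using mE by auto
    show "{\<omega>\<in>space M. (En (fst ik) (snd ik) \<omega>)\<^sup>2 > t} \<in> sets M" by measurable
  qed auto
  then show "{\<omega>\<in>space M. \<exists>i<n. \<exists>k. (En i k \<omega>)\<^sup>2 > t} \<in> sets M" unfolding eq .
qed

end


lemma meas_sub_le:
  assumes "finite_measure M" "T \<subseteq> U" "U \<in> sets M"
  shows "measure M T \<le> measure M U"
proof (cases "T \<in> sets M")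
  case True
  then show ?thesis using assms by (intro finite_measure.finite_measure_mono) auto
next
  case False
  then show ?thesis by (simp add: measure_notin_sets)
qed

lemma measure_Un5:
  assumes "A \<in> sets M" "B \<in> sets M" "C \<in> sets M" "D \<in> sets M" "F \<in> sets M"
  shows "measure M (A \<union> B \<union> C \<union> D \<union> F) \<le> measure M A + measure M B + measure M C + measure M D + measure M F"
proof -
  have "measure M (A \<union> B \<union> C \<union> D \<union> F) \<le> measure M (A \<union> B \<union> C \<union> D) + measure M F"
    using assms by (intro measure_Un_le) auto
  also have "measure M (A \<union> B \<union> C \<union> D) \<le> measure M (A \<union> B \<union> C) + measure M D"
    using assms by (intro measure_Un_le) auto
  also have "measure M (A \<union> B \<union> C) \<le> measure M (A \<union> B) + measure M C"
    using assms by (intro measure_Un_le) auto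
  also have "measure M (A \<union> B) \<le> measure M A + measure M B"
    using assms by (intro measure_Un_le) auto
  finally show ?thesis by simp
qed

lemma frac_helper1:
  fixes A c t n :: real
  assumes "n > 0" "t > 0" "A \<le> n * c"
  shows "A / (t * n)\<^sup>2 \<le> c / t\<^sup>2 / n"
proof -
  have "A / (t * n)\<^sup>2 \<le> n * c / (t * n)\<^sup>2" using assms by (intro divide_right_mono) auto
  also have "\<dots> = c / t\<^sup>2 / n" using assms by (simp add: field_simps power2_eq_square)
  finally show ?thesis .
qed

lemma frac_helper2:
  fixes A c K n :: real
  assumes "n > 0" "K > 0" "A \<le> n * c"
  shows "A / (K * n) \<le> c / K"
proof -
  have "A / (K * n) \<le> n * c / (K * n)" using assms by (intro divide_right_mono) auto
  also have "\<dots> = c / K" using assms by (simp add: field_simps)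
  finally show ?thesis .
qed


theorem lemma6:
  fixes M :: "'w measure"
    and X :: "nat \<Rightarrow> nat \<Rightarrow> real^'e"
    and Gam :: "real^'p^'e"
    and sigma2 sigmaz2 kappa :: real
    and lam :: "nat \<Rightarrow> real"
    and beta0 :: "nat \<Rightarrow> real^'e"
    and alpha0 :: "real^'e"
    and Sig :: "real^'e^'e"
    and Theta :: "real^'e"
    and E :: "nat \<Rightarrow> nat \<Rightarrow> 'p \<Rightarrow> 'w \<Rightarrow> real"
    and eps :: "nat \<Rightarrow> nat \<Rightarrow> 'w \<Rightarrow> real"
  assumes "prob_space M"
    and "sigma2 > 0" and "sigmaz2 > 0"
    and "\<forall>n. lam n \<ge> 0"
    and "\<forall>n. prob_space.indep_vars M (\<lambda>_. borel) (noise_family E eps n) (noise_index n)"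
    and "\<forall>n i k. i < n \<longrightarrow> distributed M lborel (E n i k) (normal_density 0 (sqrt sigmaz2))"
    and "\<forall>n i. i < n \<longrightarrow> distributed M lborel (eps n i) (normal_density 0 (sqrt sigma2))"
    and "kappa \<ge> 0"
    and "(\<lambda>n. lam n / real n) \<longlonglongrightarrow> kappa"
    and "(\<lambda>n. sqrt (real n) *\<^sub>R beta0 n) \<longlonglongrightarrow> alpha0"
    and "(\<lambda>n. (1 / real n) *\<^sub>R gram (X n) {..<n}) \<longlonglongrightarrow> Sig"
    and "pos_def Sig"
    and "(\<lambda>n. (1 / real n) *\<^sub>R (\<Sum>i<n. X n i)) \<longlonglongrightarrow> Theta"
    and "(\<lambda>n. MAX i\<in>{..<n}. norm (X n i)) \<in> o(\<lambda>n. real n powr (1/3))"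
  shows "\<forall>\<eta>>0. (\<lambda>n. measure M {\<omega> \<in> space M.
            sqrt (\<Sum>i<n. (delta_loo (ztilde Gam (X n) (\<lambda>i k. E n i k \<omega>)) (\<lambda>i. eps n i \<omega>) (lam n) n i
                        - delta_full (ztilde Gam (X n) (\<lambda>i k. E n i k \<omega>)) (\<lambda>i. eps n i \<omega>) (lam n) n i)\<^sup>2) > \<eta>})
          \<longlonglongrightarrow> 0"
proof (intro allI impI)
  fix \<eta> :: real assume eta: "\<eta> > 0"
  interpret prob_space M by (rule assms(1))
  define p where "p = real CARD('p)"
  have p1: "p \<ge> 1" unfolding p_def using finite_UNIV_card_ge_0[where 'a='p] by simp
  define cw where "cw n i k = (transpose Gam *v X n i) $ k" for n i k
  have Wn: "(\<Sum>k\<in>UNIV. (cw n i k)\<^sup>2) = (norm (transpose Gam *v X n i))\<^sup>2" for n i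
    by (simp add: cw_def normsq_sum)
  obtain Kw N1 where Kw: "Kw \<ge> 0" and N1: "\<And>n. n \<ge> N1 \<Longrightarrow> (\<Sum>i<n. \<Sum>k\<in>UNIV. (cw n i k)\<^sup>2) \<le> Kw * real n"
    using D1[OF assms(11), of Gam] by (auto simp: Wn)
  define \<theta> where "\<theta> = sigmaz2 / (2 * (Kw + sigmaz2))"
  define L where "L = min (\<theta> / 2) (sigmaz2 / 2) / 2"
  have th0: "\<theta> > 0" unfolding \<theta>_def using assms(3) Kw by simp
  have L0: "L > 0" unfolding L_def using th0 assms(3) by simp
  define \<delta> where "\<delta> = L / (3 * p\<^sup>2 + 2 * p)"
  have pp: "3 * p\<^sup>2 + 2 * p > 0" using p1 by (simp add: add_pos_pos)
  have d0: "\<delta> > 0" unfolding \<delta>_def using L0 pp by simp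
  have dsm: "\<delta> * (3 * p\<^sup>2 + 2 * p) = L" unfolding \<delta>_def using pp by simp
  define \<mu> where "\<mu> = L / 2"
  have mu0: "\<mu> > 0" unfolding \<mu>_def using L0 by simp
  have nf: "noise_family E eps n = (\<lambda>j. case j of Inl (i, k) \<Rightarrow> E n i k | Inr i \<Rightarrow> eps n i)" for n
    by (intro ext) (simp add: noise_family_def)
  have loc: "noise_setting M (E n) (eps n) n sigmaz2 sigma2" for n
    unfolding noise_setting_def noise_setting_axioms_def
    using assms(1-3,6,7) assms(5)[rule_format, of n] by (simp add: nf noise_index_def)
  show "(\<lambda>n. measure M {\<omega> \<in> space M.
            sqrt (\<Sum>i<n. (delta_loo (ztilde Gam (X n) (\<lambda>i k. E n i k \<omega>)) (\<lambda>i. eps n i \<omega>) (lam n) n i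
                        - delta_full (ztilde Gam (X n) (\<lambda>i k. E n i k \<omega>)) (\<lambda>i. eps n i \<omega>) (lam n) n i)\<^sup>2) > \<eta>})
          \<longlonglongrightarrow> 0"
  proof (rule LIMSEQ_I)
    fix r :: real assume r: "r > 0"
    define C3 where "C3 = sigma2 + sigma2 * Kw + p * (sigma2 * sigmaz2)"
    define C4 where "C4 = 1 + 2 * Kw + 2 * (p * sigmaz2)"
    define C5 where "C5 = sigma2 + 2 * Kw * sigma2 + p * (3 * sigma2\<^sup>2 + 3 * sigmaz2\<^sup>2)"
    have C3: "C3 \<ge> 0" unfolding C3_def using assms(2,3) Kw p1 by simp
    have C4: "C4 \<ge> 0" unfolding C4_def using assms(2,3) Kw p1 by simp
    have C5: "C5 \<ge> 0" unfolding C5_def using assms(2,3) Kw p1 by simp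
    define K where "K = 8 * (C3 + C4 + C5) / r + 1"
    have "0 \<le> 8 * (C3 + C4 + C5) / r" using C3 C4 C5 r by simp
    then have K0: "K > 0" unfolding K_def by linarith
    have KC: "(C3 + C4 + C5) / K \<le> r / 8"
    proof -
      have "8 * (C3 + C4 + C5) / r \<le> K" unfolding K_def by simp
      then have "8 * (C3 + C4 + C5) \<le> K * r" using r by (simp add: field_simps)
      then show ?thesis using K0 by (simp add: field_simps)
    qed
    define Q where "Q = 2 * K\<^sup>2 / \<mu> ^ 4 + 2 * K / \<mu>\<^sup>2"
    have Q0: "Q > 0" unfolding Q_def using K0 mu0 by (simp add: add_pos_pos)
    define d where "d = min \<mu> (min 1 (\<eta>\<^sup>2 / (4 * Q)))"
    have dpos: "d > 0" unfolding d_def using mu0 eta Q0 by simp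
    have dmu: "d \<le> \<mu>" "d \<le> 1" unfolding d_def by auto
    have dQ: "d * Q \<le> \<eta>\<^sup>2 / 4"
    proof -
      have "d \<le> \<eta>\<^sup>2 / (4 * Q)" unfolding d_def by simp
      then have "d * Q \<le> \<eta>\<^sup>2 / (4 * Q) * Q" using Q0 by (intro mult_right_mono) auto
      then show ?thesis using Q0 by simp
    qed
    define tM where "tM = d / (4 * p)"
    have tM0: "tM > 0" unfolding tM_def using dpos p1 by simp
    define C1 where "C1 = (p * sigmaz2 + p * sigmaz2 * Kw + p\<^sup>2 * (2 * sigmaz2\<^sup>2)) / \<delta>\<^sup>2"
    define C2 where "C2 = p * (3 * sigmaz2\<^sup>2) / tM\<^sup>2"
    have C12: "C1 + C2 \<ge> 0" unfolding C1_def C2_def using assms(3) Kw p1 by simp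
    obtain N2 where N2: "\<And>n i. n \<ge> N2 \<Longrightarrow> i < n \<Longrightarrow> (\<Sum>k\<in>UNIV. (cw n i k)\<^sup>2) \<le> d / 8 * real n"
      using D2[OF assms(14), of "d / 8" Gam] dpos by (auto simp: Wn)
    define N where "N = max (max N1 N2) (max (nat \<lceil>8 / d\<rceil> + 1) (nat \<lceil>4 * (C1 + C2) / r\<rceil> + 1))"
    show "\<exists>no. \<forall>n\<ge>no. norm (measure M {\<omega> \<in> space M.
            sqrt (\<Sum>i<n. (delta_loo (ztilde Gam (X n) (\<lambda>i k. E n i k \<omega>)) (\<lambda>i. eps n i \<omega>) (lam n) n i
                        - delta_full (ztilde Gam (X n) (\<lambda>i k. E n i k \<omega>)) (\<lambda>i. eps n i \<omega>) (lam n) n i)\<^sup>2) > \<eta>} - 0) < r"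
    proof (intro exI allI impI)
      fix n assume nN: "N \<le> n"
      interpret LL: noise_setting M "E n" "eps n" n sigmaz2 sigma2 by (rule loc)
      have nN1: "n \<ge> N1" and nN2: "n \<ge> N2" using nN unfolding N_def by auto
      have n8: "real n > 8 / d"
      proof -
        have "real (nat \<lceil>8 / d\<rceil> + 1) \<le> real n" using nN unfolding N_def by linarith
        moreover have "8 / d \<le> real (nat \<lceil>8 / d\<rceil>)" by linarith
        ultimately show ?thesis by simp
      qed
      have nC: "real n > 4 * (C1 + C2) / r"
      proof -
        have "real (nat \<lceil>4 * (C1 + C2) / r\<rceil> + 1) \<le> real n" using nN unfolding N_def by linarith
        moreover have "4 * (C1 + C2) / r \<le> real (nat \<lceil>4 * (C1 + C2) / r\<rceil>)" by linarith
        ultimately show ?thesis by simp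
      qed
      have npos: "real n > 0" using n8 dpos by (smt (verit) divide_pos_pos)
      have W: "(\<Sum>i<n. \<Sum>k\<in>UNIV. (cw n i k)\<^sup>2) \<le> Kw * real n" using N1 nN1 by simp
      obtain B1 where B1: "B1 \<in> sets M"
        "measure M B1 \<le> (real CARD('p) * sigmaz2 * real n + real CARD('p) * sigmaz2 * (\<Sum>i<n. \<Sum>a\<in>UNIV. (cw n i a)\<^sup>2)
           + (real CARD('p))\<^sup>2 * (real n * (2 * sigmaz2\<^sup>2))) / (\<delta> * real n)\<^sup>2"
        "\<forall>\<omega>\<in>space M - B1. (\<forall>b. \<bar>\<Sum>i<n. E n i b \<omega>\<bar> \<le> \<delta> * real n) \<and> (\<forall>a b. \<bar>\<Sum>i<n. cw n i a * E n i b \<omega>\<bar> \<le> \<delta> * real n)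
          \<and> (\<forall>a b. \<bar>\<Sum>i<n. (E n i a \<omega> * E n i b \<omega> - (if a = b then sigmaz2 else 0))\<bar> \<le> \<delta> * real n)"
        using LL.bad_gram[where t="\<delta> * real n" and cw="cw n"] d0 npos by auto
      obtain B2 where B2: "B2 \<in> sets M" "measure M B2 \<le> real n * real CARD('p) * (3 * sigmaz2\<^sup>2) / (tM * real n)\<^sup>2"
        "\<forall>\<omega>\<in>space M - B2. \<forall>i<n. \<forall>k. (E n i k \<omega>)\<^sup>2 \<le> tM * real n"
        using LL.bad_max[where t="tM * real n"] tM0 npos by auto
      obtain B3 where B3: "B3 \<in> sets M"
        "measure M B3 \<le> (\<Sum>a\<in>UNIV. \<Sum>j<n. sigma2 * (case a of None \<Rightarrow> 1 | Some k \<Rightarrow> (cw n j k)\<^sup>2 + sigmaz2)) / (K * real n)"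
        "\<forall>\<omega>\<in>space M - B3. (\<Sum>a\<in>UNIV. (\<Sum>j<n. eps n j \<omega> * (case a of None \<Rightarrow> 1 | Some k \<Rightarrow> cw n j k + E n j k \<omega>))\<^sup>2) \<le> K * real n"
        using LL.bad_C[where t="K * real n" and cw="cw n"] K0 npos by auto
      obtain B4 where B4: "B4 \<in> sets M"
        "measure M B4 \<le> (\<Sum>i<n. 1 + 2 * (\<Sum>k\<in>UNIV. (cw n i k)\<^sup>2) + 2 * (real CARD('p) * sigmaz2)) / (K * real n)"
        "\<forall>\<omega>\<in>space M - B4. (\<Sum>i<n. 1 + 2 * (\<Sum>k\<in>UNIV. (cw n i k)\<^sup>2) + 2 * (\<Sum>k\<in>UNIV. (E n i k \<omega>)\<^sup>2)) \<le> K * real n"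
        using LL.bad_U1[where t="K * real n" and cw="cw n"] K0 npos by auto
      obtain B5 where B5: "B5 \<in> sets M"
        "measure M B5 \<le> (\<Sum>i<n. sigma2 + 2 * (\<Sum>k\<in>UNIV. (cw n i k)\<^sup>2) * sigma2 + real CARD('p) * (3 * sigma2\<^sup>2 + 3 * sigmaz2\<^sup>2)) / (K * real n)"
        "\<forall>\<omega>\<in>space M - B5. (\<Sum>i<n. (eps n i \<omega>)\<^sup>2 + 2 * (\<Sum>k\<in>UNIV. (cw n i k)\<^sup>2) * (eps n i \<omega>)\<^sup>2
          + (\<Sum>k\<in>UNIV. (eps n i \<omega>) ^ 4 + (E n i k \<omega>) ^ 4)) \<le> K * real n"
        using LL.bad_U2[where t="K * real n" and cw="cw n"] K0 npos by auto
      have m1: "measure M B1 \<le> C1 / real n"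
      proof -
        have "real CARD('p) * sigmaz2 * real n + real CARD('p) * sigmaz2 * (\<Sum>i<n. \<Sum>a\<in>UNIV. (cw n i a)\<^sup>2)
           + (real CARD('p))\<^sup>2 * (real n * (2 * sigmaz2\<^sup>2)) \<le> real n * (p * sigmaz2 + p * sigmaz2 * Kw + p\<^sup>2 * (2 * sigmaz2\<^sup>2))"
        proof -
          have "p * sigmaz2 * (\<Sum>i<n. \<Sum>a\<in>UNIV. (cw n i a)\<^sup>2) \<le> p * sigmaz2 * (Kw * real n)"
            using W p1 assms(3) by (intro mult_left_mono) auto
          then show ?thesis unfolding p_def by (simp add: algebra_simps)
        qed
        from frac_helper1[OF npos d0 this] show ?thesis using B1(2) unfolding C1_def by simp
      qed
      have m2: "measure M B2 \<le> C2 / real n"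
      proof -
        have "real n * real CARD('p) * (3 * sigmaz2\<^sup>2) \<le> real n * (p * (3 * sigmaz2\<^sup>2))" unfolding p_def by simp
        from frac_helper1[OF npos tM0 this] show ?thesis using B2(2) unfolding C2_def by simp
      qed
      have m3: "measure M B3 \<le> C3 / K"
      proof -
        have "(\<Sum>a\<in>UNIV. \<Sum>j<n. sigma2 * (case a of None \<Rightarrow> 1 | Some k \<Rightarrow> (cw n j k)\<^sup>2 + sigmaz2))
            = real n * sigma2 + sigma2 * (\<Sum>j<n. \<Sum>k\<in>UNIV. (cw n j k)\<^sup>2) + real n * (p * (sigma2 * sigmaz2))"
          unfolding sum_option p_def
          by (simp add: sum.distrib sum_distrib_left distrib_left sum.swap[of _ UNIV] algebra_simps)
        also have "\<dots> \<le> real n * C3"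
        proof -
          have "sigma2 * (\<Sum>j<n. \<Sum>k\<in>UNIV. (cw n j k)\<^sup>2) \<le> sigma2 * (Kw * real n)"
            using W assms(2) by (intro mult_left_mono) auto
          then show ?thesis unfolding C3_def by (simp add: algebra_simps)
        qed
        finally show ?thesis using frac_helper2[OF npos K0] B3(2) by (meson order_trans)
      qed
      have m4: "measure M B4 \<le> C4 / K"
      proof -
        have "(\<Sum>i<n. 1 + 2 * (\<Sum>k\<in>UNIV. (cw n i k)\<^sup>2) + 2 * (real CARD('p) * sigmaz2))
            = real n + 2 * (\<Sum>i<n. \<Sum>k\<in>UNIV. (cw n i k)\<^sup>2) + real n * (2 * (p * sigmaz2))"
          unfolding p_def by (simp add: sum.distrib sum_distrib_left algebra_simps)
        also have "\<dots> \<le> real n * C4"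
        proof -
          have "2 * (\<Sum>i<n. \<Sum>k\<in>UNIV. (cw n i k)\<^sup>2) \<le> 2 * (Kw * real n)" using W by simp
          then show ?thesis unfolding C4_def by (simp add: algebra_simps)
        qed
        finally show ?thesis using frac_helper2[OF npos K0] B4(2) by (meson order_trans)
      qed
      have m5: "measure M B5 \<le> C5 / K"
      proof -
        have "(\<Sum>i<n. sigma2 + 2 * (\<Sum>k\<in>UNIV. (cw n i k)\<^sup>2) * sigma2 + real CARD('p) * (3 * sigma2\<^sup>2 + 3 * sigmaz2\<^sup>2))
            = real n * sigma2 + 2 * sigma2 * (\<Sum>i<n. \<Sum>k\<in>UNIV. (cw n i k)\<^sup>2) + real n * (p * (3 * sigma2\<^sup>2 + 3 * sigmaz2\<^sup>2))"
          unfolding p_def by (simp add: sum.distrib sum_distrib_left sum_distrib_right algebra_simps)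
        also have "\<dots> \<le> real n * C5"
        proof -
          have "2 * sigma2 * (\<Sum>i<n. \<Sum>k\<in>UNIV. (cw n i k)\<^sup>2) \<le> 2 * sigma2 * (Kw * real n)"
            using W assms(2) by (intro mult_left_mono) auto
          then show ?thesis unfolding C5_def by (simp add: algebra_simps)
        qed
        finally show ?thesis using frac_helper2[OF npos K0] B5(2) by (meson order_trans)
      qed
      have incl: "{\<omega> \<in> space M.
            sqrt (\<Sum>i<n. (delta_loo (ztilde Gam (X n) (\<lambda>i k. E n i k \<omega>)) (\<lambda>i. eps n i \<omega>) (lam n) n i
                        - delta_full (ztilde Gam (X n) (\<lambda>i k. E n i k \<omega>)) (\<lambda>i. eps n i \<omega>) (lam n) n i)\<^sup>2) > \<eta>}
          \<subseteq> B1 \<union> B2 \<union> B3 \<union> B4 \<union> B5"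
      proof (rule subsetI, rule ccontr)
        fix \<omega> assume om: "\<omega> \<in> {\<omega> \<in> space M.
            sqrt (\<Sum>i<n. (delta_loo (ztilde Gam (X n) (\<lambda>i k. E n i k \<omega>)) (\<lambda>i. eps n i \<omega>) (lam n) n i
                        - delta_full (ztilde Gam (X n) (\<lambda>i k. E n i k \<omega>)) (\<lambda>i. eps n i \<omega>) (lam n) n i)\<^sup>2) > \<eta>}"
          and nb: "\<omega> \<notin> B1 \<union> B2 \<union> B3 \<union> B4 \<union> B5"
        have osp: "\<omega> \<in> space M" using om by simp
        define z where "z = ztilde Gam (X n) (\<lambda>i k. E n i k \<omega>)"
        define v where "v = (\<lambda>i. eps n i \<omega>)"
        have g1: "\<forall>b. \<bar>\<Sum>i<n. E n i b \<omega>\<bar> \<le> \<delta> * real n" "\<forall>a b. \<bar>\<Sum>i<n. cw n i a * E n i b \<omega>\<bar> \<le> \<delta> * real n"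
          "\<forall>a b. \<bar>\<Sum>i<n. (E n i a \<omega> * E n i b \<omega> - (if a = b then sigmaz2 else 0))\<bar> \<le> \<delta> * real n"
          using B1(3) osp nb by auto
        have g2: "\<forall>i<n. \<forall>k. (E n i k \<omega>)\<^sup>2 \<le> tM * real n" using B2(3) osp nb by auto
        have g3: "(\<Sum>a\<in>UNIV. (\<Sum>j<n. eps n j \<omega> * (case a of None \<Rightarrow> 1 | Some k \<Rightarrow> cw n j k + E n j k \<omega>))\<^sup>2) \<le> K * real n"
          using B3(3) osp nb by auto
        have g4: "(\<Sum>i<n. 1 + 2 * (\<Sum>k\<in>UNIV. (cw n i k)\<^sup>2) + 2 * (\<Sum>k\<in>UNIV. (E n i k \<omega>)\<^sup>2)) \<le> K * real n"
          using B4(3) osp nb by auto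
        have g5: "(\<Sum>i<n. (eps n i \<omega>)\<^sup>2 + 2 * (\<Sum>k\<in>UNIV. (cw n i k)\<^sup>2) * (eps n i \<omega>)\<^sup>2
          + (\<Sum>k\<in>UNIV. (eps n i \<omega>) ^ 4 + (E n i k \<omega>) ^ 4)) \<le> K * real n"
          using B5(3) osp nb by auto
        have co: "2 * (\<mu> * real n) * (norm u)\<^sup>2 \<le> u \<bullet> (gram z {..<n} *v u)" for u
        proof -
          have "min (sigmaz2 / (2 * (Kw + sigmaz2)) / 2) (sigmaz2 / 2) / 2 * real n * (norm u)\<^sup>2 \<le> u \<bullet> (gram z {..<n} *v u)"
          proof (rule gram_lb[where cw="cw n" and e="\<lambda>i k. E n i k \<omega>" and Kw=Kw and sz=sigmaz2 and \<delta>=\<delta>])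
            show "\<And>i. z i $ None = 1" unfolding z_def by (simp add: zt_simps)
            show "\<And>i k. z i $ Some k = cw n i k + E n i k \<omega>" unfolding z_def by (simp add: zt_simps cw_def)
            show "0 \<le> Kw" by (rule Kw)
            show "(\<Sum>i<n. \<Sum>k\<in>UNIV. (cw n i k)\<^sup>2) \<le> Kw * real n" by (rule W)
            show "0 < sigmaz2" by (rule assms(3))
            show "\<And>b. \<bar>\<Sum>i<n. E n i b \<omega>\<bar> \<le> \<delta> * real n" using g1 by auto
            show "\<And>a b. \<bar>\<Sum>i<n. cw n i a * E n i b \<omega>\<bar> \<le> \<delta> * real n" using g1 by auto
            show "\<And>a b. \<bar>\<Sum>i<n. (E n i a \<omega> * E n i b \<omega> - (if a = b then sigmaz2 else 0))\<bar> \<le> \<delta> * real n" using g1 by auto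
            show "0 \<le> \<delta>" using d0 by simp
            show "\<delta> * (3 * (real CARD('p))\<^sup>2 + 2 * real CARD('p)) \<le> min (sigmaz2 / (2 * (Kw + sigmaz2)) / 2) (sigmaz2 / 2) / 2"
              using dsm unfolding p_def L_def \<theta>_def by simp
          qed
          then show ?thesis unfolding \<mu>_def L_def[symmetric] \<theta>_def[symmetric] by (simp add: algebra_simps)
        qed
        have zb: "(norm (z i))\<^sup>2 \<le> d * real n" if i: "i < n" for i
        proof -
          have "(norm (z i))\<^sup>2 \<le> 1 + 2 * (\<Sum>k\<in>UNIV. (cw n i k)\<^sup>2) + 2 * (\<Sum>k\<in>UNIV. (E n i k \<omega>)\<^sup>2)"
            unfolding z_def cw_def by (rule pw1)
          also have "(\<Sum>k\<in>UNIV. (E n i k \<omega>)\<^sup>2) \<le> (\<Sum>k\<in>(UNIV::'p set). tM * real n)"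
            using g2 i by (intro sum_mono) auto
          also have "(\<Sum>k\<in>(UNIV::'p set). tM * real n) = d / 4 * real n" unfolding tM_def p_def using p1 p_def by simp
          also have "(\<Sum>k\<in>UNIV. (cw n i k)\<^sup>2) \<le> d / 8 * real n" using N2 nN2 i by simp
          finally have "(norm (z i))\<^sup>2 \<le> 1 + 3 / 4 * (d * real n)" by simp
          moreover have "1 \<le> 1 / 4 * (d * real n)" using n8 dpos by (simp add: field_simps)
          ultimately show ?thesis by linarith
        qed
        have db: "(\<Sum>i<n. (delta_loo z v (lam n) n i - delta_full z v (lam n) n i)\<^sup>2)
          \<le> 2 * ((d * real n) / (\<mu> * real n))\<^sup>2 * ((norm (cross z v {..<n}))\<^sup>2 * (\<Sum>i<n. (norm (z i))\<^sup>2)) / (\<mu> * real n)\<^sup>2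
            + 2 * ((d * real n) / (\<mu> * real n)\<^sup>2) * (\<Sum>i<n. (v i)\<^sup>2 * (norm (z i))\<^sup>2)"
          by (rule det_bound[OF _ _ co zb]) (use assms(4) mu0 npos dmu in auto)
        have Xc: "(norm (cross z v {..<n}))\<^sup>2 \<le> K * real n"
        proof -
          have "(norm (cross z v {..<n}))\<^sup>2 = (\<Sum>a\<in>UNIV. (\<Sum>j<n. eps n j \<omega> * (case a of None \<Rightarrow> 1 | Some k \<Rightarrow> cw n j k + E n j k \<omega>))\<^sup>2)"
            unfolding pw3 z_def v_def zt_case cw_def by simp
          then show ?thesis using g3 by simp
        qed
        have Yz: "(\<Sum>i<n. (norm (z i))\<^sup>2) \<le> K * real n"
        proof -
          have "(\<Sum>i<n. (norm (z i))\<^sup>2) \<le> (\<Sum>i<n. 1 + 2 * (\<Sum>k\<in>UNIV. (cw n i k)\<^sup>2) + 2 * (\<Sum>k\<in>UNIV. (E n i k \<omega>)\<^sup>2))"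
            unfolding z_def cw_def by (intro sum_mono pw1)
          then show ?thesis using g4 by linarith
        qed
        have Zs: "(\<Sum>i<n. (v i)\<^sup>2 * (norm (z i))\<^sup>2) \<le> K * real n"
        proof -
          have "(\<Sum>i<n. (v i)\<^sup>2 * (norm (z i))\<^sup>2) \<le> (\<Sum>i<n. (eps n i \<omega>)\<^sup>2 + 2 * (\<Sum>k\<in>UNIV. (cw n i k)\<^sup>2) * (eps n i \<omega>)\<^sup>2
              + (\<Sum>k\<in>UNIV. (eps n i \<omega>) ^ 4 + (E n i k \<omega>) ^ 4))"
            unfolding z_def v_def cw_def by (intro sum_mono pw2)
          then show ?thesis using g5 by linarith
        qed
        have fa: "2 * ((d * real n) / (\<mu> * real n))\<^sup>2 * ((norm (cross z v {..<n}))\<^sup>2 * (\<Sum>i<n. (norm (z i))\<^sup>2)) / (\<mu> * real n)\<^sup>2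
            + 2 * ((d * real n) / (\<mu> * real n)\<^sup>2) * (\<Sum>i<n. (v i)\<^sup>2 * (norm (z i))\<^sup>2) \<le> d * Q"
          unfolding Q_def
          by (rule final_arith[OF npos mu0 _ dmu(2) _ _ Xc _ Yz _ Zs]) (use dpos K0 in \<open>auto intro: sum_nonneg\<close>)
        have "(\<Sum>i<n. (delta_loo z v (lam n) n i - delta_full z v (lam n) n i)\<^sup>2) \<le> \<eta>\<^sup>2 / 4"
          using db fa dQ by linarith
        then have "sqrt (\<Sum>i<n. (delta_loo z v (lam n) n i - delta_full z v (lam n) n i)\<^sup>2) \<le> sqrt (\<eta>\<^sup>2 / 4)"
          by (rule real_sqrt_le_mono)
        also have "sqrt (\<eta>\<^sup>2 / 4) = \<eta> / 2" using eta by (simp add: real_sqrt_divide)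
        finally have "sqrt (\<Sum>i<n. (delta_loo z v (lam n) n i - delta_full z v (lam n) n i)\<^sup>2) \<le> \<eta> / 2" .
        moreover have "sqrt (\<Sum>i<n. (delta_loo z v (lam n) n i - delta_full z v (lam n) n i)\<^sup>2) > \<eta>"
          using om unfolding z_def v_def by simp
        ultimately show False using eta by linarith
      qed
      have "measure M {\<omega> \<in> space M.
            sqrt (\<Sum>i<n. (delta_loo (ztilde Gam (X n) (\<lambda>i k. E n i k \<omega>)) (\<lambda>i. eps n i \<omega>) (lam n) n i
                        - delta_full (ztilde Gam (X n) (\<lambda>i k. E n i k \<omega>)) (\<lambda>i. eps n i \<omega>) (lam n) n i)\<^sup>2) > \<eta>}
          \<le> measure M (B1 \<union> B2 \<union> B3 \<union> B4 \<union> B5)"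
        by (rule meas_sub_le[OF LL.fm incl]) (use B1 B2 B3 B4 B5 in auto)
      also have "\<dots> \<le> measure M B1 + measure M B2 + measure M B3 + measure M B4 + measure M B5"
        by (rule measure_Un5) (use B1 B2 B3 B4 B5 in auto)
      also have "\<dots> \<le> C1 / real n + C2 / real n + C3 / K + C4 / K + C5 / K"
        using m1 m2 m3 m4 m5 by linarith
      also have "\<dots> < r"
      proof -
        have "(C1 + C2) / real n < r / 4"
          using nC npos r C12 by (simp add: field_simps)
        moreover have "C3 / K + C4 / K + C5 / K = (C3 + C4 + C5) / K" by (simp add: add_divide_distrib)
        moreover have "C1 / real n + C2 / real n = (C1 + C2) / real n" by (simp add: add_divide_distrib)
        ultimately show ?thesis using KC r by linarith
      qed
      finally show "norm (measure M {\<omega> \<in> space M.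
            sqrt (\<Sum>i<n. (delta_loo (ztilde Gam (X n) (\<lambda>i k. E n i k \<omega>)) (\<lambda>i. eps n i \<omega>) (lam n) n i
                        - delta_full (ztilde Gam (X n) (\<lambda>i k. E n i k \<omega>)) (\<lambda>i. eps n i \<omega>) (lam n) n i)\<^sup>2) > \<eta>} - 0) < r"
        by simp
    qed
  qed
qed

end
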